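(* Let $k$ be a field of characteristic zero, $D_2 = k_{+}\{x\}/[x^2]$, and $(D_2)_{id}$ the algebra obtained from $D_2$ by externally adjoining a unity. Let $f(t_1,\dots,t_n)$ be a nonzero differential polynomial in the variables $t_1,\dots,t_n$ with coefficients in $(D_2)_{id}$. Then there exist $a_1,\dots,a_n\in D_2$ such that $f(a_1,\dots,a_n)\neq 0$.
   Context: $k\{x\}$ denotes the differential polynomial algebra in one indeterminate: the polynomial algebra $k[x_0,x_1,x_2,\dots]$ (with $x=x_0$) with the $k$-linear derivation satisfying $x_n' = x_{n+1}$. $k_{+}\{x\}$ is its subalgebra (without unity) of differential polynomials with zero constant term; $[x^2]$ is the differential ideal (ideal closed under the derivation) of $k_{+}\{x\}$ generated by $x^2$; $D_2$ carries the induced derivation, extended to $(D_2)_{id} = k\cdot 1\oplus D_2$ by $1' = 0$. A differential polynomial in $t_1,\dots,t_n$ with coefficients in $(D_2)_{id}$ is an element of the polynomial ring $(D_2)_{id}[t_{i,j} : 1\le i\le n,\ j\ge 0]$ (where $t_{i,j}$ stands for the $j$-th derivative of $t_i$); $f(a_1,\dots,a_n)$ denotes the element of $(D_2)_{id}$ obtained by substituting $t_{i,j}\mapsto a_i^{(j)}$. *)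

theory Defs
  imports Main "HOL-Library.Poly_Mapping"
begin

(* The differential polynomial algebra k{x} = k[x_0,x_1,...]: finitely supported
  maps from monomials (exponent vectors nat \<Rightarrow>\<^sub>0 nat) to coefficients. *)
type_synonym 'k dpoly = "(nat \<Rightarrow>\<^sub>0 nat) \<Rightarrow>\<^sub>0 'k"

(* The variable x_j (j-th derivative of x). *)
definition dvar :: "nat \<Rightarrow> 'k::comm_ring_1 dpoly" where
  "dvar j = Poly_Mapping.single (Poly_Mapping.single j 1) 1"

definition dconst :: "'k::comm_ring_1 \<Rightarrow> 'k dpoly" where
  "dconst c = Poly_Mapping.single 0 c"

(* The k-linear derivation with x_n' = x_{n+1} (Leibniz rule on monomials). *)
definition dderiv :: "'k::comm_ring_1 dpoly \<Rightarrow> 'k dpoly" where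
  "dderiv p = (\<Sum>m\<in>Poly_Mapping.keys p. \<Sum>i\<in>Poly_Mapping.keys (m::nat \<Rightarrow>\<^sub>0 nat).
      Poly_Mapping.single (m - Poly_Mapping.single i 1 + Poly_Mapping.single (Suc i) 1)
        (Poly_Mapping.lookup p m * of_nat (Poly_Mapping.lookup m i)))"

definition kplus :: "'k::comm_ring_1 dpoly set" where
  "kplus = {p. Poly_Mapping.lookup p 0 = 0}"

(* [x^2]: the differential ideal of the (non-unital) algebra k_+{x} generated by x^2. *)
inductive_set dideal_x2 :: "'k::comm_ring_1 dpoly set" where
  gen: "dvar 0 * dvar 0 \<in> dideal_x2"
| zero: "0 \<in> dideal_x2"
| add: "p \<in> dideal_x2 \<Longrightarrow> q \<in> dideal_x2 \<Longrightarrow> p + q \<in> dideal_x2"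
| smult: "p \<in> dideal_x2 \<Longrightarrow> dconst c * p \<in> dideal_x2"
| mult: "p \<in> dideal_x2 \<Longrightarrow> q \<in> kplus \<Longrightarrow> q * p \<in> dideal_x2"
| deriv: "p \<in> dideal_x2 \<Longrightarrow> dderiv p \<in> dideal_x2"

(* Elements of (D_2)_id = k\<cdot>1 \<oplus> D_2 are represented by polynomials in k{x}
  (c + q with q \<in> k_+{x}), two representatives being equal iff their difference lies in [x^2].
  Elements of D_2 are those represented by elements of k_+{x}. *)
definition D2_zero :: "'k::comm_ring_1 dpoly \<Rightarrow> bool" where
  "D2_zero p \<longleftrightarrow> p \<in> dideal_x2"

(* Differential polynomials in t_1..t_n over (D_2)_id: polynomials in variables t_{i,j}
  (index (i,j)), coefficients given by representatives in k{x}. *)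
type_synonym 'k dpoly_over = "((nat \<times> nat) \<Rightarrow>\<^sub>0 nat) \<Rightarrow>\<^sub>0 'k dpoly"

(* Substitution t_{i,j} \<mapsto> a_i^{(j)}, computed on representatives. *)
definition deval :: "'k::comm_ring_1 dpoly_over \<Rightarrow> (nat \<Rightarrow> 'k dpoly) \<Rightarrow> 'k dpoly" where
  "deval f a = (\<Sum>m\<in>Poly_Mapping.keys f. Poly_Mapping.lookup f m *
      (\<Prod>v\<in>Poly_Mapping.keys m. ((dderiv ^^ snd v) (a (fst v))) ^ Poly_Mapping.lookup m v))"

end

theory Submission
  imports Defs "HOL-Computational_Algebra.Polynomial"
begin

abbreviation XX :: "(nat \<Rightarrow>\<^sub>0 nat) \<Rightarrow> 'k::comm_ring_1 dpoly" where
  "XX m \<equiv> Poly_Mapping.single m 1"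

lemma pm_expand_superset:
  fixes p :: "'a \<Rightarrow>\<^sub>0 'b::comm_monoid_add"
  assumes "finite A" "Poly_Mapping.keys p \<subseteq> A"
  shows "p = (\<Sum>m\<in>A. Poly_Mapping.single m (Poly_Mapping.lookup p m))"
proof (rule poly_mapping_eqI)
  fix k
  have "(\<Sum>m\<in>A. Poly_Mapping.lookup (Poly_Mapping.single m (Poly_Mapping.lookup p m)) k)
      = (\<Sum>m\<in>A. if m = k then Poly_Mapping.lookup p m else 0)"
    by (rule sum.cong) (auto simp: lookup_single when_def)
  also have "\<dots> = Poly_Mapping.lookup p k"
    using assms by (auto simp: sum.delta in_keys_iff)
  finally show "Poly_Mapping.lookup p k = Poly_Mapping.lookup (\<Sum>m\<in>A. Poly_Mapping.single m (Poly_Mapping.lookup p m)) k"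
    by (simp add: lookup_sum)
qed

lemma pm_expand:
  fixes p :: "'a \<Rightarrow>\<^sub>0 'b::comm_monoid_add"
  shows "p = (\<Sum>m\<in>Poly_Mapping.keys p. Poly_Mapping.single m (Poly_Mapping.lookup p m))"
  by (rule pm_expand_superset) auto

lemma single_scal: "Poly_Mapping.single (m::nat\<Rightarrow>\<^sub>0nat) (c::'k::comm_ring_1) = dconst c * XX m"
  unfolding dconst_def by (simp add: mult_single)

lemma pm_expand_dconst:
  fixes p :: "'k::comm_ring_1 dpoly"
  assumes "finite A" "Poly_Mapping.keys p \<subseteq> A"
  shows "p = (\<Sum>m\<in>A. dconst (Poly_Mapping.lookup p m) * XX m)"
proof -
  have "p = (\<Sum>m\<in>A. Poly_Mapping.single m (Poly_Mapping.lookup p m))"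
    by (rule pm_expand_superset[OF assms])
  also have "\<dots> = (\<Sum>m\<in>A. dconst (Poly_Mapping.lookup p m) * XX m)"
    by (rule sum.cong[OF refl], rule single_scal)
  finally show ?thesis .
qed

lemma mult_expand:
  fixes p q :: "'k::comm_ring_1 dpoly"
  assumes "finite A" "Poly_Mapping.keys p \<subseteq> A" "finite B" "Poly_Mapping.keys q \<subseteq> B"
  shows "p * q = (\<Sum>a\<in>A. \<Sum>b\<in>B. Poly_Mapping.single (a + b) (Poly_Mapping.lookup p a * Poly_Mapping.lookup q b))"
proof -
  have "p * q = (\<Sum>a\<in>A. Poly_Mapping.single a (Poly_Mapping.lookup p a)) * (\<Sum>b\<in>B. Poly_Mapping.single b (Poly_Mapping.lookup q b))"
    by (rule arg_cong2[where f="(*)", OF pm_expand_superset[OF assms(1,2)] pm_expand_superset[OF assms(3,4)]])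
  also have "\<dots> = (\<Sum>a\<in>A. \<Sum>b\<in>B. Poly_Mapping.single (a + b) (Poly_Mapping.lookup p a * Poly_Mapping.lookup q b))"
    unfolding sum_product by (simp only: mult_single)
  finally show ?thesis .
qed

lemma dconst_add: "dconst (a + b) = dconst a + (dconst b :: 'k::comm_ring_1 dpoly)"
  by (simp add: dconst_def single_add)
lemma dconst_mult: "dconst (a * b) = dconst a * (dconst b :: 'k::comm_ring_1 dpoly)"
  by (simp add: dconst_def mult_single)
lemma dconst_0[simp]: "dconst 0 = (0 :: 'k::comm_ring_1 dpoly)"
  by (simp add: dconst_def)
lemma dconst_1[simp]: "dconst 1 = (1 :: 'k::comm_ring_1 dpoly)"
  by (simp add: dconst_def)

definition tdeg :: "(nat \<Rightarrow>\<^sub>0 nat) \<Rightarrow> nat" where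
  "tdeg m = sum (Poly_Mapping.lookup m) (Poly_Mapping.keys m)"

lemma tdeg_superset:
  assumes "finite A" "Poly_Mapping.keys m \<subseteq> A"
  shows "tdeg m = sum (Poly_Mapping.lookup m) A"
  unfolding tdeg_def using assms
  by (intro sum.mono_neutral_left) (auto simp: in_keys_iff)

lemma keys_add_nat: "Poly_Mapping.keys (a + b :: 'a \<Rightarrow>\<^sub>0 nat) = Poly_Mapping.keys a \<union> Poly_Mapping.keys b"
  by (auto simp: in_keys_iff lookup_add)

lemma tdeg_add: "tdeg (a + b) = tdeg a + tdeg b"
proof -
  let ?A = "Poly_Mapping.keys a \<union> Poly_Mapping.keys b"
  have fin: "finite ?A" by simp
  have e1: "tdeg (a + b) = sum (Poly_Mapping.lookup (a + b)) ?A"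
    by (rule tdeg_superset[OF fin]) (simp add: keys_add_nat)
  have e2: "tdeg a = sum (Poly_Mapping.lookup a) ?A"
    by (rule tdeg_superset[OF fin]) blast
  have e3: "tdeg b = sum (Poly_Mapping.lookup b) ?A"
    by (rule tdeg_superset[OF fin]) blast
  have e4: "sum (Poly_Mapping.lookup (a + b)) ?A = sum (Poly_Mapping.lookup a) ?A + sum (Poly_Mapping.lookup b) ?A"
    unfolding sum.distrib[symmetric] by (rule sum.cong[OF refl]) (rule lookup_add)
  show ?thesis unfolding e1 e4 e2[symmetric] e3[symmetric] by (rule refl)
qed

lemma tdeg_single[simp]: "tdeg (Poly_Mapping.single i e) = e"
  by (simp add: tdeg_def)

lemma tdeg_0[simp]: "tdeg 0 = 0"
  by (simp add: tdeg_def)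

lemma tdeg_eq_0: "tdeg m = 0 \<Longrightarrow> m = 0"
proof -
  assume "tdeg m = 0"
  hence "\<forall>i\<in>Poly_Mapping.keys m. Poly_Mapping.lookup m i = 0" by (simp add: tdeg_def)
  hence "Poly_Mapping.keys m = {}" using in_keys_iff by blast
  thus "m = 0" by simp
qed

lemma sub_single_add:
  assumes "Poly_Mapping.lookup m i \<ge> 1"
  shows "(m + n) - Poly_Mapping.single i 1 = (m - Poly_Mapping.single i 1) + (n :: 'a \<Rightarrow>\<^sub>0 nat)"
proof (intro poly_mapping_eqI)
  fix k
  show "Poly_Mapping.lookup ((m + n) - Poly_Mapping.single i 1) k = Poly_Mapping.lookup ((m - Poly_Mapping.single i 1) + n) k"
    using assms by (cases "i = k") (simp_all add: lookup_add lookup_minus lookup_single when_def)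
qed

lemma sub_single_add2:
  assumes "Poly_Mapping.lookup n i \<ge> 1"
  shows "(m + n) - Poly_Mapping.single i 1 = m + (n - Poly_Mapping.single i 1 :: 'a \<Rightarrow>\<^sub>0 nat)"
  using sub_single_add[OF assms, of m] by (simp add: add.commute)

lemma sub_single_readd:
  assumes "i \<in> Poly_Mapping.keys m"
  shows "(m - Poly_Mapping.single i 1) + Poly_Mapping.single i 1 = (m :: 'a \<Rightarrow>\<^sub>0 nat)"
proof (intro poly_mapping_eqI)
  fix k
  show "Poly_Mapping.lookup ((m - Poly_Mapping.single i 1) + Poly_Mapping.single i 1) k = Poly_Mapping.lookup m k"
    using assms by (cases "i = k") (simp_all add: lookup_add lookup_minus lookup_single when_def in_keys_iff)
qed

lemma tdeg_sub_single:
  assumes "i \<in> Poly_Mapping.keys m"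
  shows "tdeg (m - Poly_Mapping.single i 1) = tdeg m - 1" "tdeg m \<ge> 1"
proof -
  have "tdeg m = tdeg (m - Poly_Mapping.single i 1) + 1"
    using sub_single_readd[OF assms] tdeg_add by (metis tdeg_single)
  then show "tdeg (m - Poly_Mapping.single i 1) = tdeg m - 1" "tdeg m \<ge> 1" by auto
qed

lemma dvar_power: "dvar i ^ e = (XX (Poly_Mapping.single i e) :: 'k::comm_ring_1 dpoly)"
  by (induction e) (auto simp: dvar_def mult_single single_add[symmetric] mult.commute)

lemma prod_single_one:
  "finite A \<Longrightarrow> (\<Prod>i\<in>A. (XX (f i) :: 'k::comm_ring_1 dpoly)) = XX (\<Sum>i\<in>A. f i)"
  by (induction A rule: finite_induct) (auto simp: mult_single)

lemma monomial_prod: "XX m = (\<Prod>i\<in>Poly_Mapping.keys m. (dvar i ^ Poly_Mapping.lookup m i :: 'k::comm_ring_1 dpoly))"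
proof -
  have "(\<Prod>i\<in>Poly_Mapping.keys m. (dvar i ^ Poly_Mapping.lookup m i :: 'k dpoly))
      = XX (\<Sum>i\<in>Poly_Mapping.keys m. Poly_Mapping.single i (Poly_Mapping.lookup m i))"
    by (simp add: dvar_power prod_single_one)
  also have "(\<Sum>i\<in>Poly_Mapping.keys m. Poly_Mapping.single i (Poly_Mapping.lookup m i)) = m"
    by (rule pm_expand[symmetric])
  finally show ?thesis by simp
qed

section \<open>Derivations\<close>

definition dmon :: "(nat \<Rightarrow> 'k::comm_ring_1 dpoly) \<Rightarrow> (nat \<Rightarrow>\<^sub>0 nat) \<Rightarrow> 'k dpoly" where
  "dmon g m = (\<Sum>i\<in>Poly_Mapping.keys m. of_nat (Poly_Mapping.lookup m i) * XX (m - Poly_Mapping.single i 1) * g i)"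

definition der :: "(nat \<Rightarrow> 'k::comm_ring_1 dpoly) \<Rightarrow> 'k dpoly \<Rightarrow> 'k dpoly" where
  "der g p = (\<Sum>m\<in>Poly_Mapping.keys p. dconst (Poly_Mapping.lookup p m) * dmon g m)"

lemma dmon_superset:
  assumes "finite A" "Poly_Mapping.keys m \<subseteq> A"
  shows "dmon g m = (\<Sum>i\<in>A. of_nat (Poly_Mapping.lookup m i) * XX (m - Poly_Mapping.single i 1) * g i)"
  unfolding dmon_def using assms by (intro sum.mono_neutral_left) (auto simp: in_keys_iff)

lemma dmon_add: "dmon g (a + b) = dmon g a * XX b + XX a * dmon g b"
proof -
  let ?A = "Poly_Mapping.keys a \<union> Poly_Mapping.keys b"
  have fin: "finite ?A" by simp
  have ea: "dmon g a = (\<Sum>i\<in>?A. of_nat (Poly_Mapping.lookup a i) * XX (a - Poly_Mapping.single i 1) * g i)"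
    by (rule dmon_superset[OF fin]) blast
  have eb: "dmon g b = (\<Sum>i\<in>?A. of_nat (Poly_Mapping.lookup b i) * XX (b - Poly_Mapping.single i 1) * g i)"
    by (rule dmon_superset[OF fin]) blast
  have "dmon g (a + b) = (\<Sum>i\<in>?A. of_nat (Poly_Mapping.lookup (a + b) i) * XX (a + b - Poly_Mapping.single i 1) * g i)"
    by (rule dmon_superset[OF fin]) (simp add: keys_add_nat)
  also have "\<dots> = (\<Sum>i\<in>?A. of_nat (Poly_Mapping.lookup a i) * XX (a - Poly_Mapping.single i 1) * g i * XX b
          + XX a * (of_nat (Poly_Mapping.lookup b i) * XX (b - Poly_Mapping.single i 1) * g i))"
  proof (rule sum.cong[OF refl])
    fix i
    have t1: "of_nat (Poly_Mapping.lookup a i) * XX (a + b - Poly_Mapping.single i 1)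
        = of_nat (Poly_Mapping.lookup a i) * (XX (a - Poly_Mapping.single i 1) * XX b :: 'a dpoly)"
    proof (cases "Poly_Mapping.lookup a i = 0")
      case False then have "Poly_Mapping.lookup a i \<ge> 1" by simp
      then show ?thesis by (simp only: sub_single_add mult_single mult_1_right)
    qed simp
    have t2: "of_nat (Poly_Mapping.lookup b i) * XX (a + b - Poly_Mapping.single i 1)
        = of_nat (Poly_Mapping.lookup b i) * (XX a * XX (b - Poly_Mapping.single i 1) :: 'a dpoly)"
    proof (cases "Poly_Mapping.lookup b i = 0")
      case False then have "Poly_Mapping.lookup b i \<ge> 1" by simp
      then show ?thesis by (simp only: sub_single_add2 mult_single mult_1_right)
    qed simp
    have "of_nat (Poly_Mapping.lookup (a + b) i) * XX (a + b - Poly_Mapping.single i 1) * g i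
        = of_nat (Poly_Mapping.lookup a i) * XX (a + b - Poly_Mapping.single i 1) * g i
          + of_nat (Poly_Mapping.lookup b i) * XX (a + b - Poly_Mapping.single i 1) * g i"
      by (simp add: lookup_add distrib_right)
    also have "\<dots> = of_nat (Poly_Mapping.lookup a i) * XX (a - Poly_Mapping.single i 1) * g i * XX b
          + XX a * (of_nat (Poly_Mapping.lookup b i) * XX (b - Poly_Mapping.single i 1) * g i)"
      using t1 t2 by (simp add: mult.assoc mult.left_commute)
    finally show "of_nat (Poly_Mapping.lookup (a + b) i) * XX (a + b - Poly_Mapping.single i 1) * g i
        = of_nat (Poly_Mapping.lookup a i) * XX (a - Poly_Mapping.single i 1) * g i * XX b
          + XX a * (of_nat (Poly_Mapping.lookup b i) * XX (b - Poly_Mapping.single i 1) * g i)" .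
  qed
  also have "\<dots> = dmon g a * XX b + XX a * dmon g b"
    unfolding ea eb by (simp add: sum.distrib sum_distrib_left sum_distrib_right)
  finally show ?thesis .
qed

lemma der_superset:
  assumes "finite A" "Poly_Mapping.keys p \<subseteq> A"
  shows "der g p = (\<Sum>m\<in>A. dconst (Poly_Mapping.lookup p m) * dmon g m)"
  unfolding der_def using assms by (intro sum.mono_neutral_left) (auto simp: in_keys_iff)

lemma der_add: "der g (p + q) = der g p + der g q"
proof -
  let ?A = "Poly_Mapping.keys p \<union> Poly_Mapping.keys q"
  have fin: "finite ?A" by simp
  have "der g (p + q) = (\<Sum>m\<in>?A. dconst (Poly_Mapping.lookup (p + q) m) * dmon g m)"
    by (rule der_superset[OF fin]) (rule keys_add)
  also have "\<dots> = (\<Sum>m\<in>?A. dconst (Poly_Mapping.lookup p m) * dmon g m) + (\<Sum>m\<in>?A. dconst (Poly_Mapping.lookup q m) * dmon g m)"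
    by (simp add: lookup_add dconst_add distrib_right sum.distrib)
  also have "\<dots> = der g p + der g q"
    by (simp add: der_superset[OF fin, symmetric])
  finally show ?thesis .
qed

lemma der_0[simp]: "der g 0 = 0"
  by (simp add: der_def)

lemma der_single: "der g (Poly_Mapping.single m c) = dconst c * dmon g m"
proof -
  have "der g (Poly_Mapping.single m c) = (\<Sum>m'\<in>{m}. dconst (Poly_Mapping.lookup (Poly_Mapping.single m c) m') * dmon g m')"
    by (rule der_superset) auto
  then show ?thesis by simp
qed

lemma der_sum: "finite S \<Longrightarrow> der g (sum f S) = (\<Sum>s\<in>S. der g (f s))"
  by (induction S rule: finite_induct) (simp_all add: der_add)

lemma der_mult: "der g (p * q) = der g p * q + p * der g q"
proof -
  let ?A = "Poly_Mapping.keys p" and ?B = "Poly_Mapping.keys q"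
  have "der g (p * q) = der g (\<Sum>a\<in>?A. \<Sum>b\<in>?B. Poly_Mapping.single (a + b) (Poly_Mapping.lookup p a * Poly_Mapping.lookup q b))"
    by (rule arg_cong[where f="der g", OF mult_expand]) auto
  also have "\<dots> = (\<Sum>a\<in>?A. \<Sum>b\<in>?B. dconst (Poly_Mapping.lookup p a) * dconst (Poly_Mapping.lookup q b) * (dmon g a * XX b + XX a * dmon g b))"
    by (simp add: der_sum der_single dmon_add dconst_mult)
  also have "\<dots> = (\<Sum>a\<in>?A. \<Sum>b\<in>?B. dconst (Poly_Mapping.lookup p a) * dmon g a * (dconst (Poly_Mapping.lookup q b) * XX b))
      + (\<Sum>a\<in>?A. \<Sum>b\<in>?B. dconst (Poly_Mapping.lookup p a) * XX a * (dconst (Poly_Mapping.lookup q b) * dmon g b))"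
    by (simp add: sum.distrib[symmetric] algebra_simps)
  also have "\<dots> = (\<Sum>a\<in>?A. dconst (Poly_Mapping.lookup p a) * dmon g a) * (\<Sum>b\<in>?B. dconst (Poly_Mapping.lookup q b) * XX b)
      + (\<Sum>a\<in>?A. dconst (Poly_Mapping.lookup p a) * XX a) * (\<Sum>b\<in>?B. dconst (Poly_Mapping.lookup q b) * dmon g b)"
    by (simp only: sum_product)
  also have "\<dots> = der g p * q + p * der g q"
    by (simp add: der_def pm_expand_dconst[of "Poly_Mapping.keys p" p, symmetric] pm_expand_dconst[of "Poly_Mapping.keys q" q, symmetric])
  finally show ?thesis .
qed

definition pd :: "nat \<Rightarrow> 'k::comm_ring_1 dpoly \<Rightarrow> 'k dpoly" where
  "pd j = der (\<lambda>i. if i = j then 1 else 0)"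

lemma dmon_single: "dmon g (Poly_Mapping.single i 1) = g i"
  unfolding dmon_def by simp

lemma der_dvar: "der g (dvar i) = g i"
  unfolding dvar_def der_single dmon_single by simp

lemma der_dconst: "der g (dconst c) = 0"
proof -
  have "dmon g 0 = 0" by (simp add: dmon_def)
  then show ?thesis by (simp add: dconst_def der_single)
qed

lemma der_minus: "der g (p - q) = der g p - der g q"
  using der_add[of g "p - q" q] by simp

lemma der_uminus: "der g (- p) = - der g p"
  using der_minus[of g 0 p] by simp

lemma dderiv_der: "dderiv p = der (\<lambda>i. dvar (Suc i)) p"
  unfolding dderiv_def der_def dmon_def
proof (rule sum.cong[OF refl])
  fix m
  show "(\<Sum>i\<in>Poly_Mapping.keys m. Poly_Mapping.single (m - Poly_Mapping.single i 1 + Poly_Mapping.single (Suc i) 1)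
          (Poly_Mapping.lookup p m * of_nat (Poly_Mapping.lookup m i))) =
      dconst (Poly_Mapping.lookup p m) * (\<Sum>i\<in>Poly_Mapping.keys m. of_nat (Poly_Mapping.lookup m i) * XX (m - Poly_Mapping.single i 1) * dvar (Suc i))"
    unfolding sum_distrib_left
  proof (rule sum.cong[OF refl])
    fix i
    show "Poly_Mapping.single (m - Poly_Mapping.single i 1 + Poly_Mapping.single (Suc i) 1)
          (Poly_Mapping.lookup p m * of_nat (Poly_Mapping.lookup m i)) =
        dconst (Poly_Mapping.lookup p m) * (of_nat (Poly_Mapping.lookup m i) * XX (m - Poly_Mapping.single i 1) * dvar (Suc i))"
      by (simp add: dconst_def dvar_def mult_single single_of_nat[symmetric] del: single_of_nat)
  qed
qed

lemma dderiv_add: "dderiv (p + q) = dderiv p + dderiv q"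
  by (simp add: dderiv_der der_add)
lemma dderiv_mult: "dderiv (p * q) = dderiv p * q + p * dderiv q"
  by (simp add: dderiv_der der_mult)
lemma dderiv_dvar: "dderiv (dvar i) = dvar (Suc i)"
  by (simp add: dderiv_der der_dvar)
lemma dderiv_0[simp]: "dderiv 0 = 0"
  by (simp add: dderiv_der)
lemma dderiv_sum: "finite S \<Longrightarrow> dderiv (sum f S) = (\<Sum>s\<in>S. dderiv (f s))"
  by (simp add: dderiv_der der_sum)

lemma dderiv_iter_dvar: "(dderiv ^^ j) (dvar i) = dvar (i + j)"
  by (induction j) (simp_all add: dderiv_dvar)

lemma pd_add: "pd j (p + q) = pd j p + pd j q"
  by (simp add: pd_def der_add)
lemma pd_mult: "pd j (p * q) = pd j p * q + p * pd j q"
  by (simp add: pd_def der_mult)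
lemma pd_dvar: "pd j (dvar i) = (if i = j then 1 else 0)"
  by (simp add: pd_def der_dvar)
lemma pd_0[simp]: "pd j 0 = 0"
  by (simp add: pd_def)
lemma pd_sum: "finite S \<Longrightarrow> pd j (sum f S) = (\<Sum>s\<in>S. pd j (f s))"
  by (simp add: pd_def der_sum)
lemma pd_dconst: "pd j (dconst c) = 0"
  by (simp add: pd_def der_dconst)

lemma dmon_delta: "dmon (\<lambda>i. if i = j then 1 else 0) m = of_nat (Poly_Mapping.lookup m j) * XX (m - Poly_Mapping.single j 1)"
proof (cases "j \<in> Poly_Mapping.keys m")
  case True
  have "dmon (\<lambda>i. if i = j then 1 else 0) m = (\<Sum>i\<in>Poly_Mapping.keys m. if i = j then of_nat (Poly_Mapping.lookup m i) * XX (m - Poly_Mapping.single i 1) else 0)"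
    unfolding dmon_def by (rule sum.cong) auto
  also have "\<dots> = of_nat (Poly_Mapping.lookup m j) * XX (m - Poly_Mapping.single j 1)"
    using True by (simp add: sum.delta)
  finally show ?thesis .
next
  case False
  then show ?thesis by (auto simp: dmon_def in_keys_iff intro!: sum.neutral)
qed

lemma of_nat_dconst: "(of_nat n :: 'k::comm_ring_1 dpoly) = dconst (of_nat n)"
  by (simp add: dconst_def)

lemma pd_single: "pd j (Poly_Mapping.single m c) = dconst (c * of_nat (Poly_Mapping.lookup m j)) * XX (m - Poly_Mapping.single j 1)"
proof -
  have "pd j (Poly_Mapping.single m c) = dconst c * (of_nat (Poly_Mapping.lookup m j) * XX (m - Poly_Mapping.single j 1))"
    by (simp add: pd_def der_single dmon_delta)
  also have "\<dots> = dconst (c * of_nat (Poly_Mapping.lookup m j)) * XX (m - Poly_Mapping.single j 1)"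
    unfolding of_nat_dconst[of "Poly_Mapping.lookup m j"] dconst_mult by (simp only: mult.assoc)
  finally show ?thesis .
qed

lemma keys_pd:
  assumes "m' \<in> Poly_Mapping.keys (pd j p)"
  shows "\<exists>m\<in>Poly_Mapping.keys p. j \<in> Poly_Mapping.keys m \<and> m' = m - Poly_Mapping.single j 1"
proof -
  have "pd j p = pd j (\<Sum>m\<in>Poly_Mapping.keys p. Poly_Mapping.single m (Poly_Mapping.lookup p m))"
    by (rule arg_cong[where f="pd j", OF pm_expand])
  also have "\<dots> = (\<Sum>m\<in>Poly_Mapping.keys p. dconst (Poly_Mapping.lookup p m * of_nat (Poly_Mapping.lookup m j)) * XX (m - Poly_Mapping.single j 1))"
    by (simp add: pd_sum pd_single)
  also have "\<dots> = (\<Sum>m\<in>Poly_Mapping.keys p. Poly_Mapping.single (m - Poly_Mapping.single j 1) (Poly_Mapping.lookup p m * of_nat (Poly_Mapping.lookup m j)))"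
    by (rule sum.cong[OF refl]) (rule single_scal[symmetric])
  finally have e: "pd j p = \<dots>" .
  have ks: "Poly_Mapping.keys (pd j p) \<subseteq> (\<Union>m\<in>Poly_Mapping.keys p. Poly_Mapping.keys (Poly_Mapping.single (m - Poly_Mapping.single j 1) (Poly_Mapping.lookup p m * of_nat (Poly_Mapping.lookup m j) :: 'a)))"
    unfolding e by (rule keys_sum)
  from ks assms obtain m where m: "m \<in> Poly_Mapping.keys p"
     "m' \<in> Poly_Mapping.keys (Poly_Mapping.single (m - Poly_Mapping.single j 1) (Poly_Mapping.lookup p m * of_nat (Poly_Mapping.lookup m j) :: 'a))"
    by blast
  have "Poly_Mapping.lookup p m * of_nat (Poly_Mapping.lookup m j) \<noteq> (0::'a) \<and> m' = m - Poly_Mapping.single j 1"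
    using m(2) by (cases "Poly_Mapping.lookup p m * of_nat (Poly_Mapping.lookup m j) = (0::'a)") simp_all
  then have "Poly_Mapping.lookup p m * of_nat (Poly_Mapping.lookup m j) \<noteq> (0::'a)" "m' = m - Poly_Mapping.single j 1"
    by auto
  then have "j \<in> Poly_Mapping.keys m" by (cases "Poly_Mapping.lookup m j = 0") (auto simp: in_keys_iff)
  with m \<open>m' = _\<close> show ?thesis by blast
qed

lemma pd_zero_if_absent:
  assumes "\<forall>m\<in>Poly_Mapping.keys p. j \<notin> Poly_Mapping.keys m"
  shows "pd j p = 0"
proof (rule ccontr)
  assume "pd j p \<noteq> 0"
  then have "Poly_Mapping.keys (pd j p) \<noteq> {}" by simp
  then obtain m' where "m' \<in> Poly_Mapping.keys (pd j p)" by blast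
  from keys_pd[OF this] assms show False by blast
qed

definition monins :: "(nat \<Rightarrow> 'k::comm_ring_1 dpoly poly) \<Rightarrow> (nat \<Rightarrow>\<^sub>0 nat) \<Rightarrow> 'k dpoly poly" where
  "monins g m = (\<Prod>i\<in>Poly_Mapping.keys m. g i ^ Poly_Mapping.lookup m i)"

definition ins :: "(nat \<Rightarrow> 'k::comm_ring_1 dpoly poly) \<Rightarrow> 'k dpoly \<Rightarrow> 'k dpoly poly" where
  "ins g p = (\<Sum>m\<in>Poly_Mapping.keys p. smult (dconst (Poly_Mapping.lookup p m)) (monins g m))"

lemma monins_superset:
  assumes "finite A" "Poly_Mapping.keys m \<subseteq> A"
  shows "monins g m = (\<Prod>i\<in>A. g i ^ Poly_Mapping.lookup m i)"
  unfolding monins_def using assms by (intro prod.mono_neutral_left) (auto simp: in_keys_iff)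

lemma monins_add: "monins g (a + b) = monins g a * monins g b"
proof -
  let ?A = "Poly_Mapping.keys a \<union> Poly_Mapping.keys b"
  have fin: "finite ?A" by simp
  have ea: "monins g a = (\<Prod>i\<in>?A. g i ^ Poly_Mapping.lookup a i)"
    by (rule monins_superset[OF fin]) blast
  have eb: "monins g b = (\<Prod>i\<in>?A. g i ^ Poly_Mapping.lookup b i)"
    by (rule monins_superset[OF fin]) blast
  have "monins g (a + b) = (\<Prod>i\<in>?A. g i ^ Poly_Mapping.lookup (a + b) i)"
    by (rule monins_superset[OF fin]) (simp add: keys_add_nat)
  also have "\<dots> = (\<Prod>i\<in>?A. g i ^ Poly_Mapping.lookup a i * g i ^ Poly_Mapping.lookup b i)"
    by (rule prod.cong[OF refl]) (simp add: lookup_add power_add)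
  also have "\<dots> = monins g a * monins g b"
    unfolding ea eb by (rule prod.distrib)
  finally show ?thesis .
qed

lemma monins_0[simp]: "monins g 0 = 1"
  by (simp add: monins_def)

lemma monins_single: "monins g (Poly_Mapping.single i 1) = g i"
  unfolding monins_def by simp

lemma ins_superset:
  assumes "finite A" "Poly_Mapping.keys p \<subseteq> A"
  shows "ins g p = (\<Sum>m\<in>A. smult (dconst (Poly_Mapping.lookup p m)) (monins g m))"
  unfolding ins_def using assms by (intro sum.mono_neutral_left) (auto simp: in_keys_iff)

lemma ins_add: "ins g (p + q) = ins g p + ins g q"
proof -
  let ?A = "Poly_Mapping.keys p \<union> Poly_Mapping.keys q"
  have fin: "finite ?A" by simp
  have "ins g (p + q) = (\<Sum>m\<in>?A. smult (dconst (Poly_Mapping.lookup (p + q) m)) (monins g m))"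
    by (rule ins_superset[OF fin]) (rule keys_add)
  also have "\<dots> = (\<Sum>m\<in>?A. smult (dconst (Poly_Mapping.lookup p m)) (monins g m)) + (\<Sum>m\<in>?A. smult (dconst (Poly_Mapping.lookup q m)) (monins g m))"
    by (simp add: lookup_add dconst_add smult_add_left sum.distrib)
  also have "\<dots> = ins g p + ins g q"
    by (simp add: ins_superset[OF fin, symmetric])
  finally show ?thesis .
qed

lemma ins_0[simp]: "ins g 0 = 0"
  by (simp add: ins_def)

lemma ins_single: "ins g (Poly_Mapping.single m c) = smult (dconst c) (monins g m)"
proof -
  have "ins g (Poly_Mapping.single m c) = (\<Sum>m'\<in>{m}. smult (dconst (Poly_Mapping.lookup (Poly_Mapping.single m c) m')) (monins g m'))"
    by (rule ins_superset) auto
  then show ?thesis by simp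
qed

lemma ins_sum: "finite S \<Longrightarrow> ins g (sum f S) = (\<Sum>s\<in>S. ins g (f s))"
  by (induction S rule: finite_induct) (simp_all add: ins_add)

lemma ins_mult: "ins g (p * q) = ins g p * ins g q"
proof -
  let ?A = "Poly_Mapping.keys p" and ?B = "Poly_Mapping.keys q"
  have "ins g (p * q) = ins g (\<Sum>a\<in>?A. \<Sum>b\<in>?B. Poly_Mapping.single (a + b) (Poly_Mapping.lookup p a * Poly_Mapping.lookup q b))"
    by (rule arg_cong[where f="ins g", OF mult_expand]) auto
  also have "\<dots> = (\<Sum>a\<in>?A. \<Sum>b\<in>?B. smult (dconst (Poly_Mapping.lookup p a)) (monins g a) * smult (dconst (Poly_Mapping.lookup q b)) (monins g b))"
    by (simp add: ins_sum ins_single monins_add dconst_mult mult.commute mult.left_commute)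
  also have "\<dots> = ins g p * ins g q"
    by (simp add: ins_def sum_product)
  finally show ?thesis .
qed

lemma ins_dvar: "ins g (dvar i) = g i"
  unfolding dvar_def ins_single monins_single by simp

lemma ins_dconst: "ins g (dconst c) = [:dconst c:]"
  unfolding dconst_def ins_single by simp

lemma ins_1[simp]: "ins g 1 = 1"
  using ins_dconst[of g 1] by (simp add: one_pCons)

lemma ins_minus: "ins g (p - q) = ins g p - ins g q"
  using ins_add[of g "p - q" q] by simp

lemma ins_of_nat: "ins g (of_nat n) = of_nat n"
  by (induction n) (simp_all add: ins_add)

lemma ins_power: "ins g (p ^ n) = ins g p ^ n"
  by (induction n) (simp_all add: ins_mult)

lemma coeff_monins_0:
  assumes "\<And>i. coeff (g i) 0 = dvar i"
  shows "coeff (monins g m) 0 = XX m"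
proof -
  have "coeff (monins g m) 0 = poly (monins g m) 0" by (simp add: poly_0_coeff_0)
  also have "\<dots> = (\<Prod>i\<in>Poly_Mapping.keys m. dvar i ^ Poly_Mapping.lookup m i)"
  proof -
    have "poly (monins g m) 0 = (\<Prod>i\<in>Poly_Mapping.keys m. poly (g i) 0 ^ Poly_Mapping.lookup m i)"
      by (simp only: monins_def poly_prod poly_power)
    also have "\<dots> = (\<Prod>i\<in>Poly_Mapping.keys m. dvar i ^ Poly_Mapping.lookup m i)"
      by (simp add: poly_0_coeff_0 assms)
    finally show ?thesis .
  qed
  also have "\<dots> = XX m" by (rule monomial_prod[symmetric])
  finally show ?thesis .
qed

lemma coeff_ins_0:
  assumes "\<And>i. coeff (g i) 0 = dvar i"
  shows "coeff (ins g p) 0 = p"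
proof -
  have "coeff (ins g p) 0 = (\<Sum>m\<in>Poly_Mapping.keys p. dconst (Poly_Mapping.lookup p m) * XX m)"
    by (simp add: ins_def coeff_sum coeff_monins_0[OF assms])
  also have "\<dots> = p" by (rule pm_expand_dconst[symmetric]) auto
  finally show ?thesis .
qed

lemma degree_monins:
  assumes "\<And>i. degree (g i) \<le> 1"
  shows "degree (monins g m) \<le> tdeg m"
proof -
  have "degree (monins g m) \<le> (\<Sum>i\<in>Poly_Mapping.keys m. degree (g i ^ Poly_Mapping.lookup m i))"
    unfolding monins_def using degree_prod_sum_le[of "Poly_Mapping.keys m" "\<lambda>i. g i ^ Poly_Mapping.lookup m i"] by (simp add: o_def)
  also have "\<dots> \<le> (\<Sum>i\<in>Poly_Mapping.keys m. Poly_Mapping.lookup m i)"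
  proof (rule sum_mono)
    fix i
    have "degree (g i ^ Poly_Mapping.lookup m i) \<le> degree (g i) * Poly_Mapping.lookup m i" by (rule degree_power_le)
    also have "\<dots> \<le> Poly_Mapping.lookup m i" using assms[of i] by simp
    finally show "degree (g i ^ Poly_Mapping.lookup m i) \<le> Poly_Mapping.lookup m i" .
  qed
  finally show ?thesis by (simp add: tdeg_def)
qed

lemma degree_ins:
  assumes "\<And>i. degree (g i) \<le> 1" "\<forall>m\<in>Poly_Mapping.keys p. tdeg m \<le> d"
  shows "degree (ins g p) \<le> d"
  unfolding ins_def
proof (rule degree_sum_le)
  fix m assume "m \<in> Poly_Mapping.keys p"
  then have "degree (monins g m) \<le> d" using degree_monins[of g m] assms by force
  then show "degree (smult (dconst (Poly_Mapping.lookup p m)) (monins g m)) \<le> d"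
    using degree_smult_le order_trans by blast
qed simp

lemma pascal_sum:
  fixes f :: "nat \<Rightarrow> nat \<Rightarrow> 'a::comm_semiring_1"
  shows "(\<Sum>k\<le>n. of_nat (n choose k) * f (Suc k) (n - k)) + (\<Sum>k\<le>n. of_nat (n choose k) * f k (Suc n - k))
       = (\<Sum>k\<le>Suc n. of_nat (Suc n choose k) * f k (Suc n - k))"
proof -
  have A: "(\<Sum>k\<le>n. of_nat (n choose k) * f k (Suc n - k)) = f 0 (Suc n) + (\<Sum>k\<le>n. of_nat (n choose Suc k) * f (Suc k) (n - k))"
  proof -
    have "(\<Sum>k\<le>n. of_nat (n choose k) * f k (Suc n - k)) = (\<Sum>k\<le>Suc n. of_nat (n choose k) * f k (Suc n - k))"
      by (simp add: sum.atMost_Suc binomial_eq_0)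
    also have "\<dots> = f 0 (Suc n) + (\<Sum>k\<le>n. of_nat (n choose Suc k) * f (Suc k) (n - k))"
      by (subst sum.atMost_Suc_shift) simp
    finally show ?thesis .
  qed
  have B: "(\<Sum>k\<le>Suc n. of_nat (Suc n choose k) * f k (Suc n - k)) = f 0 (Suc n) + (\<Sum>k\<le>n. (of_nat (n choose k) + of_nat (n choose Suc k)) * f (Suc k) (n - k))"
    by (subst sum.atMost_Suc_shift) simp
  show ?thesis unfolding A B by (simp add: distrib_right sum.distrib algebra_simps)
qed

lemma shift_sum:
  fixes f :: "nat \<Rightarrow> nat \<Rightarrow> 'a::comm_semiring_1"
  shows "(\<Sum>i\<le>n. of_nat (n choose i) * of_nat i * f (i - 1) (n - i)) = of_nat n * (\<Sum>i\<le>n - 1. of_nat (n - 1 choose i) * f i (n - 1 - i))"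
proof (cases n)
  case 0 then show ?thesis by simp
next
  case (Suc m)
  have "(\<Sum>i\<le>Suc m. of_nat (Suc m choose i) * of_nat i * f (i - 1) (Suc m - i))
      = (\<Sum>i\<le>m. of_nat (Suc m choose Suc i) * of_nat (Suc i) * f i (m - i))"
    by (subst sum.atMost_Suc_shift) simp
  also have "\<dots> = (\<Sum>i\<le>m. of_nat (Suc m) * (of_nat (m choose i) * f i (m - i)))"
  proof (rule sum.cong[OF refl])
    fix i
    have key: "Suc i * (Suc m choose Suc i) = Suc m * (m choose i)" by (rule Suc_times_binomial)
    have k2: "(of_nat (Suc i * (Suc m choose Suc i)) :: 'a) = of_nat (Suc m * (m choose i))" by (simp only: key)
    then have "(of_nat (Suc m choose Suc i) :: 'a) * of_nat (Suc i) = of_nat (Suc m) * of_nat (m choose i)"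
      by (simp only: of_nat_mult mult.commute)
    then show "of_nat (Suc m choose Suc i) * of_nat (Suc i) * f i (m - i) = of_nat (Suc m) * (of_nat (m choose i) * f i (m - i))"
      by (simp only: mult.assoc[symmetric])
  qed
  also have "\<dots> = of_nat (Suc m) * (\<Sum>i\<le>m. of_nat (m choose i) * f i (m - i))"
    by (simp add: sum_distrib_left)
  finally show ?thesis using Suc by simp
qed

lemma shift_sum2:
  fixes f :: "nat \<Rightarrow> nat \<Rightarrow> 'a::comm_semiring_1"
  shows "(\<Sum>i\<le>n. of_nat (n choose i) * of_nat (n - i) * f i (n - i - 1)) = of_nat n * (\<Sum>i\<le>n - 1. of_nat (n - 1 choose i) * f i (n - 1 - i))"
proof (cases n)
  case 0 then show ?thesis by simp
next
  case (Suc m)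
  have "(\<Sum>i\<le>Suc m. of_nat (Suc m choose i) * of_nat (Suc m - i) * f i (Suc m - i - 1))
      = (\<Sum>i\<le>m. of_nat (Suc m choose i) * of_nat (Suc m - i) * f i (Suc m - i - 1))"
    by (simp add: sum.atMost_Suc)
  also have "\<dots> = (\<Sum>i\<le>m. of_nat (Suc m) * (of_nat (m choose i) * f i (m - i)))"
  proof (rule sum.cong[OF refl])
    fix i assume "i \<in> {..m}"
    have key: "(Suc m - i) * (Suc m choose i) = Suc m * (m choose i)"
      using binomial_absorb_comp[of "Suc m" i] by (simp only: diff_Suc_1)
    have k2: "(of_nat ((Suc m - i) * (Suc m choose i)) :: 'a) = of_nat (Suc m * (m choose i))" by (simp only: key)
    then have "(of_nat (Suc m choose i) :: 'a) * of_nat (Suc m - i) = of_nat (Suc m) * of_nat (m choose i)"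
      by (simp only: of_nat_mult mult.commute)
    moreover have "Suc m - i - 1 = m - i" by simp
    ultimately show "of_nat (Suc m choose i) * of_nat (Suc m - i) * f i (Suc m - i - 1) = of_nat (Suc m) * (of_nat (m choose i) * f i (m - i))"
      by (simp only: mult.assoc[symmetric])
  qed
  also have "\<dots> = of_nat (Suc m) * (\<Sum>i\<le>m. of_nat (m choose i) * f i (m - i))"
    by (simp add: sum_distrib_left)
  finally show ?thesis using Suc by simp
qed

section \<open>The generators q_n\<close>

definition qq :: "nat \<Rightarrow> 'k::comm_ring_1 dpoly" where
  "qq n = (\<Sum>i\<le>n. of_nat (n choose i) * (dvar i * dvar (n - i)))"

lemma qq_0: "qq 0 = dvar 0 * dvar 0"
  by (simp add: qq_def)

lemma dderiv_of_nat: "dderiv (of_nat n :: 'k::comm_ring_1 dpoly) = 0"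
  by (simp add: of_nat_dconst dderiv_der der_dconst)

lemma dderiv_qq: "dderiv (qq n) = qq (Suc n)"
proof -
  have "dderiv (qq n) = (\<Sum>i\<le>n. of_nat (n choose i) * (dvar (Suc i) * dvar (n - i) + dvar i * dvar (Suc (n - i))))"
    by (simp add: qq_def dderiv_sum dderiv_mult dderiv_of_nat dderiv_dvar)
  also have "\<dots> = (\<Sum>i\<le>n. of_nat (n choose i) * (dvar (Suc i) * dvar (n - i))) + (\<Sum>i\<le>n. of_nat (n choose i) * (dvar i * dvar (Suc n - i)))"
    by (simp add: distrib_left sum.distrib Suc_diff_le)
  also have "\<dots> = qq (Suc n)"
    unfolding qq_def by (rule pascal_sum[where f="\<lambda>a b. dvar a * dvar b"])
  finally show ?thesis .
qed

section \<open>Closure properties of the ideal\<close>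

lemma dideal_mult_any: "p \<in> dideal_x2 \<Longrightarrow> r * p \<in> dideal_x2"
proof -
  assume p: "p \<in> dideal_x2"
  let ?c = "Poly_Mapping.lookup r 0"
  have "r - dconst ?c \<in> kplus"
    by (simp add: kplus_def dconst_def lookup_minus)
  then have "(r - dconst ?c) * p \<in> dideal_x2" by (rule dideal_x2.mult[OF p])
  moreover have "dconst ?c * p \<in> dideal_x2" using p by (rule dideal_x2.smult)
  ultimately have "(r - dconst ?c) * p + dconst ?c * p \<in> dideal_x2" by (rule dideal_x2.add)
  then show ?thesis by (simp add: algebra_simps)
qed

lemma dideal_sum: "finite S \<Longrightarrow> (\<And>s. s \<in> S \<Longrightarrow> f s \<in> dideal_x2) \<Longrightarrow> sum f S \<in> dideal_x2"
  by (induction S rule: finite_induct) (auto intro: dideal_x2.zero dideal_x2.add)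

lemma dideal_uminus: "p \<in> dideal_x2 \<Longrightarrow> - p \<in> dideal_x2"
  using dideal_mult_any[of p "-1"] by simp

lemma dideal_diff: "p \<in> dideal_x2 \<Longrightarrow> q \<in> dideal_x2 \<Longrightarrow> p - q \<in> dideal_x2"
proof -
  assume p: "p \<in> dideal_x2" and q: "q \<in> dideal_x2"
  have "p + (- q) \<in> dideal_x2" by (rule dideal_x2.add[OF p dideal_uminus[OF q]])
  then show ?thesis by simp
qed

lemma qq_in_dideal: "qq n \<in> dideal_x2"
proof (induction n)
  case 0 then show ?case by (simp add: qq_0 dideal_x2.gen)
next
  case (Suc n) then show ?case using dideal_x2.deriv[of "qq n"] by (simp add: dderiv_qq)
qed

inductive_set igen :: "'k::comm_ring_1 dpoly set" where
  igen0: "0 \<in> igen"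
| igenS: "p \<in> igen \<Longrightarrow> p + h * qq n \<in> igen"

lemma igen_add:
  assumes "p \<in> igen" "q \<in> igen" shows "p + q \<in> igen"
  using assms(2)
proof (induction q rule: igen.induct)
  case igen0 then show ?case using assms(1) by simp
next
  case (igenS q h n)
  have "(p + q) + h * qq n \<in> igen" using igenS.IH by (rule igen.igenS)
  then show ?case by (simp add: add.assoc)
qed

lemma igen_mult: "p \<in> igen \<Longrightarrow> r * p \<in> igen"
proof (induction p rule: igen.induct)
  case igen0 then show ?case by (simp add: igen.igen0)
next
  case (igenS p h n)
  then have "r * p + (r * h) * qq n \<in> igen" by (intro igen.igenS)
  then show ?case by (simp add: algebra_simps)
qed

lemma igen_qq: "h * qq n \<in> igen"
  using igen.igenS[OF igen.igen0, of h n] by simp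

lemma igen_deriv: "p \<in> igen \<Longrightarrow> dderiv p \<in> igen"
proof (induction p rule: igen.induct)
  case igen0 then show ?case by (simp add: igen.igen0)
next
  case (igenS p h n)
  have "dderiv (p + h * qq n) = dderiv p + (dderiv h * qq n + h * qq (Suc n))"
    by (simp add: dderiv_add dderiv_mult dderiv_qq)
  moreover have "dderiv h * qq n + h * qq (Suc n) \<in> igen"
    by (intro igen_add igen_qq)
  ultimately show ?case using igenS.IH igen_add by simp
qed

lemma dideal_sub_igen: "p \<in> dideal_x2 \<Longrightarrow> p \<in> igen"
proof (induction rule: dideal_x2.induct)
  case gen then show ?case using igen_qq[of 1 0] by (simp add: qq_0)
next
  case zero then show ?case by (rule igen.igen0)
next
  case (add p q) show ?case by (rule igen_add[OF add.IH])
next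
  case (smult p c) show ?case by (rule igen_mult[OF smult.IH])
next
  case (mult p q) show ?case by (rule igen_mult[OF mult.IH])
next
  case (deriv p) show ?case by (rule igen_deriv[OF deriv.IH])
qed

lemma igen_sub_dideal: "p \<in> igen \<Longrightarrow> p \<in> dideal_x2"
proof (induction rule: igen.induct)
  case igen0 then show ?case by (rule dideal_x2.zero)
next
  case (igenS p h n)
  then show ?case by (intro dideal_x2.add dideal_mult_any qq_in_dideal)
qed

definition phiv :: "nat \<Rightarrow> 'k::comm_ring_1 dpoly poly" where
  "phiv i = [: dvar i, - (of_nat i * dvar (i - 1)) :]"

abbreviation Phi :: "'k::comm_ring_1 dpoly \<Rightarrow> 'k dpoly poly" where
  "Phi \<equiv> ins phiv"

lemma coeff_phiv: "coeff (phiv i) 0 = dvar i" "coeff (phiv i) (Suc 0) = - (of_nat i * dvar (i - 1))"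
  "coeff (phiv i) (Suc (Suc k)) = 0"
  by (simp_all add: phiv_def)

lemma degree_phiv: "degree (phiv i) \<le> 1"
  unfolding phiv_def by (rule order_trans[OF degree_pCons_le]) simp

lemma Phi_coeff0: "coeff (Phi p) 0 = p"
  by (rule coeff_ins_0) (simp add: coeff_phiv)

lemma degree_Phi: "\<forall>m\<in>Poly_Mapping.keys p. tdeg m \<le> d \<Longrightarrow> degree (Phi p) \<le> d"
  by (rule degree_ins) (rule degree_phiv)

lemma pd_of_nat: "pd j (of_nat c :: 'k::comm_ring_1 dpoly) = 0"
  by (simp add: of_nat_dconst pd_dconst)

lemma coeff_of_nat_mult: "coeff (of_nat c * p) k = of_nat c * coeff p k"
  by (simp add: of_nat_poly)

lemma coeff_phiv_mult:
  "coeff (phiv a * phiv b) 0 = dvar a * dvar b"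
  "coeff (phiv a * phiv b) 1 = - (of_nat b * (dvar a * dvar (b - 1))) - of_nat a * (dvar (a - 1) * dvar b)"
  "coeff (phiv a * phiv b) 2 = of_nat a * (of_nat b * (dvar (a - 1) * dvar (b - 1)))"
  by (simp_all add: coeff_mult phiv_def numeral_2_eq_2 algebra_simps)

lemma Phi_qq: "Phi (qq n) = (\<Sum>i\<le>n. of_nat (n choose i) * (phiv i * phiv (n - i)))"
  by (simp add: qq_def ins_sum ins_mult ins_of_nat ins_dvar)

lemma degree_Phi_qq: "degree (Phi (qq n :: 'k::comm_ring_1 dpoly)) \<le> 2"
  unfolding Phi_qq
proof (rule degree_sum_le)
  fix i
  have "degree (phiv i * phiv (n - i) :: 'k dpoly poly) \<le> 2"
  proof -
    have a: "degree (phiv i :: 'k dpoly poly) \<le> 1" by (rule degree_phiv)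
    have b: "degree (phiv (n - i) :: 'k dpoly poly) \<le> 1" by (rule degree_phiv)
    have c: "degree (phiv i * phiv (n - i) :: 'k dpoly poly) \<le> degree (phiv i :: 'k dpoly poly) + degree (phiv (n - i) :: 'k dpoly poly)"
      by (rule degree_mult_le)
    from a b c show ?thesis by linarith
  qed
  moreover have "of_nat (n choose i) * (phiv i * phiv (n - i)) = smult (of_nat (n choose i)) (phiv i * phiv (n - i) :: 'k dpoly poly)"
    by (simp add: of_nat_poly)
  ultimately show "degree (of_nat (n choose i) * (phiv i * phiv (n - i)) :: 'k dpoly poly) \<le> 2"
    using degree_smult_le order_trans by metis
qed simp

lemma coeff1_Phi_qq: "coeff (Phi (qq n)) 1 = - (of_nat n * qq (n - 1)) - of_nat n * qq (n - 1)"
proof -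
  have s1: "(\<Sum>i\<le>n. of_nat (n choose i) * of_nat i * (dvar (i - 1) * dvar (n - i))) = of_nat n * (\<Sum>i\<le>n - 1. of_nat (n - 1 choose i) * (dvar i * dvar (n - 1 - i)))"
    by (rule shift_sum[where f="\<lambda>a b. dvar a * dvar b" and n=n])
  have s2: "(\<Sum>i\<le>n. of_nat (n choose i) * of_nat (n - i) * (dvar i * dvar (n - i - 1))) = of_nat n * (\<Sum>i\<le>n - 1. of_nat (n - 1 choose i) * (dvar i * dvar (n - 1 - i)))"
    by (rule shift_sum2[where f="\<lambda>a b. dvar a * dvar b" and n=n])
  have "coeff (Phi (qq n)) 1 = (\<Sum>i\<le>n. of_nat (n choose i) * (- (of_nat (n - i) * (dvar i * dvar (n - i - 1))) - of_nat i * (dvar (i - 1) * dvar (n - i))))"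
    by (simp only: Phi_qq coeff_sum coeff_of_nat_mult coeff_phiv_mult)
  also have "\<dots> = (\<Sum>i\<le>n. - (of_nat (n choose i) * of_nat (n - i) * (dvar i * dvar (n - i - 1))) - of_nat (n choose i) * of_nat i * (dvar (i - 1) * dvar (n - i)))"
    by (rule sum.cong[OF refl]) (simp only: right_diff_distrib mult_minus_right mult.assoc)
  also have "\<dots> = - (\<Sum>i\<le>n. of_nat (n choose i) * of_nat (n - i) * (dvar i * dvar (n - i - 1))) - (\<Sum>i\<le>n. of_nat (n choose i) * of_nat i * (dvar (i - 1) * dvar (n - i)))"
    by (simp only: sum_subtractf sum_negf)
  also have "\<dots> = - (of_nat n * qq (n - 1)) - of_nat n * qq (n - 1)"
    unfolding s1 s2 qq_def by (rule refl)
  finally show ?thesis .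
qed

lemma coeff2_Phi_qq: "coeff (Phi (qq n)) 2 = of_nat n * (of_nat (n - 1) * qq (n - 1 - 1))"
proof -
  have s1: "(\<Sum>i\<le>n. of_nat (n choose i) * of_nat i * (of_nat (n - i) * (dvar (i - 1) * dvar (n - i - 1))))
     = of_nat n * (\<Sum>i\<le>n - 1. of_nat (n - 1 choose i) * (of_nat (n - 1 - i) * (dvar i * dvar (n - 1 - i - 1))))"
    by (rule shift_sum[where f="\<lambda>a b. of_nat b * (dvar a * dvar (b - 1))" and n=n])
  have s2: "(\<Sum>i\<le>n - 1. of_nat (n - 1 choose i) * of_nat (n - 1 - i) * (dvar i * dvar (n - 1 - i - 1)))
     = of_nat (n - 1) * (\<Sum>i\<le>n - 1 - 1. of_nat (n - 1 - 1 choose i) * (dvar i * dvar (n - 1 - 1 - i)))"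
    by (rule shift_sum2[where f="\<lambda>a b. dvar a * dvar b" and n="n - 1"])
  have "coeff (Phi (qq n)) 2 = (\<Sum>i\<le>n. of_nat (n choose i) * (of_nat i * (of_nat (n - i) * (dvar (i - 1) * dvar (n - i - 1)))))"
    by (simp only: Phi_qq coeff_sum coeff_of_nat_mult coeff_phiv_mult)
  also have "\<dots> = of_nat n * (\<Sum>i\<le>n - 1. of_nat (n - 1 choose i) * (of_nat (n - 1 - i) * (dvar i * dvar (n - 1 - i - 1))))"
    unfolding s1[symmetric] by (simp only: mult.assoc)
  also have "\<dots> = of_nat n * (of_nat (n - 1) * qq (n - 1 - 1))"
    unfolding qq_def s2[symmetric] by (simp only: mult.assoc)
  finally show ?thesis .
qed

lemma coeff_Phi_qq_dideal: "coeff (Phi (qq n)) b \<in> dideal_x2"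
proof -
  consider "b = 0" | "b = 1" | "b = 2" | "b > 2" by linarith
  then show ?thesis
  proof cases
    case 1 then show ?thesis by (simp add: Phi_coeff0 qq_in_dideal)
  next
    case 2
    have "- (of_nat n * qq (n - 1)) - of_nat n * qq (n - 1) \<in> dideal_x2"
      by (intro dideal_diff dideal_uminus dideal_mult_any qq_in_dideal)
    then show ?thesis unfolding 2 coeff1_Phi_qq .
  next
    case 3
    have "of_nat n * (of_nat (n - 1) * qq (n - 1 - 1)) \<in> dideal_x2"
      by (intro dideal_mult_any qq_in_dideal)
    then show ?thesis unfolding 3 coeff2_Phi_qq .
  next
    case 4
    have "coeff (Phi (qq n :: 'a dpoly)) b = 0"
      by (intro coeff_eq_0 le_less_trans[OF degree_Phi_qq 4])
    then show ?thesis using dideal_x2.zero by simp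
  qed
qed

lemma pd_qq: "pd j (qq n :: 'k::comm_ring_1 dpoly) = (if j \<le> n then of_nat (2 * (n choose j)) * dvar (n - j) else 0)"
proof -
  have "pd j (qq n :: 'k dpoly) = (\<Sum>i\<le>n. of_nat (n choose i) * ((if i = j then 1 else 0) * dvar (n - i) + dvar i * (if n - i = j then 1 else 0)))"
    by (simp add: qq_def pd_sum pd_mult pd_of_nat pd_dvar)
  also have "\<dots> = (\<Sum>i\<le>n. if i = j then of_nat (n choose i) * dvar (n - i) else 0) + (\<Sum>i\<le>n. if i = n - j \<and> j \<le> n then of_nat (n choose i) * dvar i else 0)"
    unfolding sum.distrib[symmetric] by (rule sum.cong[OF refl]) auto
  also have "\<dots> = (if j \<le> n then of_nat (n choose j) * dvar (n - j) else 0) + (if j \<le> n then of_nat (n choose (n - j)) * dvar (n - j) else 0)"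
    by (simp add: sum.delta)
  also have "\<dots> = (if j \<le> n then of_nat (2 * (n choose j)) * dvar (n - j) else 0)"
    by (simp add: binomial_symmetric[symmetric] algebra_simps)
  finally show ?thesis .
qed

lemma Phi_pd_qq: "Phi (pd j (qq n :: 'k::comm_ring_1 dpoly)) = (if j \<le> n then of_nat (2 * (n choose j)) * phiv (n - j) else 0)"
proof (cases "j \<le> n")
  case True
  then show ?thesis by (simp only: pd_qq if_True ins_mult ins_of_nat ins_dvar)
next
  case False
  then show ?thesis by (simp only: pd_qq if_False ins_0)
qed

lemma nat_binom_id: "fact (Suc s) * (2 * (n choose Suc s)) = fact s * (2 * (n choose s)) * (n - s)"
proof -
  have e1: "Suc s * (n choose Suc s) = n * ((n - 1) choose s)"
    using times_binomial_minus1_eq[of "Suc s" n] by simp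
  have e2: "(n - s) * (n choose s) = n * ((n - 1) choose s)"
    by (rule binomial_absorb_comp)
  have "fact (Suc s) * (2 * (n choose Suc s)) = fact s * 2 * (Suc s * (n choose Suc s))"
    by (simp add: fact_Suc algebra_simps)
  also have "\<dots> = fact s * 2 * ((n - s) * (n choose s))" using e1 e2 by simp
  finally show ?thesis by (simp add: algebra_simps)
qed

lemma W_zero:
  "(\<Sum>j\<le>Suc s. of_nat (fact j) * coeff (Phi (pd j (qq n :: 'k::comm_ring_1 dpoly))) (Suc s - j)) = 0"
proof -
  let ?c = "\<lambda>j. coeff (Phi (pd j (qq n :: 'k dpoly))) (Suc s - j)"
  have z: "?c j = 0" if "j < s" for j
  proof -
    have e: "Suc s - j = Suc (Suc (s - j - 1))" using that by simp
    show ?thesis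
    proof (cases "j \<le> n")
      case True then show ?thesis by (simp only: e Phi_pd_qq if_True coeff_of_nat_mult coeff_phiv mult_zero_right)
    next
      case False then show ?thesis by (simp only: e Phi_pd_qq if_False coeff_0)
    qed
  qed
  have split: "{..Suc s} = insert (Suc s) (insert s {..<s})" by auto
  have "(\<Sum>j\<le>Suc s. of_nat (fact j) * ?c j) = of_nat (fact (Suc s)) * ?c (Suc s) + (of_nat (fact s) * ?c s + (\<Sum>j<s. of_nat (fact j) * ?c j))"
    unfolding split by (simp add: sum.insert)
  also have "(\<Sum>j<s. of_nat (fact j) * ?c j) = 0" using z by simp
  also have "of_nat (fact (Suc s)) * ?c (Suc s) + (of_nat (fact s) * ?c s + 0) = 0"
  proof -
    consider "s < n" | "s = n" | "s > n" by linarith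
    then show ?thesis
    proof cases
      case 1
      have e0: "Suc s - Suc s = 0" by simp
      have e1: "Suc s - s = Suc 0" by simp
      have i1: "n - Suc s = n - s - 1" by simp
      have cS: "?c (Suc s) = of_nat (2 * (n choose Suc s)) * dvar (n - s - 1)"
        using 1 by (simp only: e0 Phi_pd_qq coeff_of_nat_mult coeff_phiv i1 Suc_leI if_True)
      have cs: "?c s = of_nat (2 * (n choose s)) * (- (of_nat (n - s) * dvar (n - s - 1)))"
        using 1 by (simp only: e1 Phi_pd_qq coeff_of_nat_mult coeff_phiv less_imp_le if_True)
      have key: "(of_nat (fact (Suc s)) * of_nat (2 * (n choose Suc s)) :: 'k dpoly) = of_nat (fact s) * of_nat (2 * (n choose s)) * of_nat (n - s)"
        using arg_cong[OF nat_binom_id[of s n], of "of_nat :: nat \<Rightarrow> 'k dpoly"] by (simp only: of_nat_mult)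
      have "of_nat (fact (Suc s)) * ?c (Suc s) + (of_nat (fact s) * ?c s + 0)
          = (of_nat (fact (Suc s)) * of_nat (2 * (n choose Suc s)) - of_nat (fact s) * of_nat (2 * (n choose s)) * of_nat (n - s)) * dvar (n - s - 1)"
        unfolding cS cs by (simp add: algebra_simps)
      also have "\<dots> = 0" unfolding key by simp
      finally show ?thesis .
    next
      case 2
      have e0: "Suc s - Suc s = 0" by simp
      have e1: "Suc s - s = Suc 0" by simp
      have cS: "?c (Suc s) = 0" using 2 by (simp add: Phi_pd_qq)
      have e2: "Suc n - n = Suc 0" by simp
      have cs: "?c s = 0" using 2 by (simp only: e1 e2 Phi_pd_qq order_refl if_True coeff_of_nat_mult coeff_phiv diff_self_eq_0 of_nat_0 mult_zero_left minus_zero mult_zero_right)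
      show ?thesis unfolding cS cs by simp
    next
      case 3
      have cS: "?c (Suc s) = 0" using 3 by (simp add: Phi_pd_qq)
      have cs: "?c s = 0" using 3 by (simp add: Phi_pd_qq)
      show ?thesis unfolding cS cs by simp
    qed
  qed
  finally show ?thesis .
qed

definition VPhi :: "nat \<Rightarrow> 'k::comm_ring_1 dpoly \<Rightarrow> 'k dpoly poly" where
  "VPhi K p = (\<Sum>j\<le>K. monom (of_nat (fact j)) j * Phi (pd j p))"

definition TT :: "nat \<Rightarrow> 'k::comm_ring_1 dpoly \<Rightarrow> 'k dpoly" where
  "TT K p = coeff (VPhi K p) K"

lemma VPhi_add: "VPhi K (p + q) = VPhi K p + VPhi K q"
  by (simp add: VPhi_def pd_add ins_add distrib_left sum.distrib)

lemma VPhi_mult: "VPhi K (h * q) = VPhi K h * Phi q + Phi h * VPhi K q"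
proof -
  have "VPhi K (h * q) = (\<Sum>j\<le>K. monom (of_nat (fact j)) j * Phi (pd j h) * Phi q + Phi h * (monom (of_nat (fact j)) j * Phi (pd j q)))"
    unfolding VPhi_def by (rule sum.cong[OF refl]) (simp add: pd_mult ins_add ins_mult algebra_simps)
  also have "\<dots> = VPhi K h * Phi q + Phi h * VPhi K q"
    unfolding VPhi_def by (simp add: sum.distrib sum_distrib_left sum_distrib_right)
  finally show ?thesis .
qed

lemma TT_add: "TT K (p + q) = TT K p + TT K q"
  by (simp add: TT_def VPhi_add)

lemma TT_0[simp]: "TT K 0 = 0"
  by (simp add: TT_def VPhi_def)

lemma coeff_VPhi:
  assumes "r \<le> K"
  shows "coeff (VPhi K p) r = (\<Sum>j\<le>r. of_nat (fact j) * coeff (Phi (pd j p)) (r - j))"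
proof -
  have "coeff (VPhi K p) r = (\<Sum>j\<le>K. if r < j then 0 else of_nat (fact j) * coeff (Phi (pd j p)) (r - j))"
    by (simp add: VPhi_def coeff_sum coeff_monom_mult)
  also have "\<dots> = (\<Sum>j\<le>r. if r < j then 0 else of_nat (fact j) * coeff (Phi (pd j p)) (r - j))"
    using assms by (intro sum.mono_neutral_right) auto
  also have "\<dots> = (\<Sum>j\<le>r. of_nat (fact j) * coeff (Phi (pd j p)) (r - j))"
    by (rule sum.cong) auto
  finally show ?thesis .
qed

lemma Phi_zero_high:
  assumes "\<forall>m\<in>Poly_Mapping.keys h. tdeg m < K"
  shows "coeff (Phi h) K = 0"
proof (cases "K = 0")
  case True
  with assms have "Poly_Mapping.keys h = {}" by auto
  then have "h = 0" by simp
  then show ?thesis by simp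
next
  case False
  have "degree (Phi h) \<le> K - 1" using assms by (intro degree_Phi) auto
  then show ?thesis using False by (intro coeff_eq_0) linarith
qed

lemma TT_gen:
  assumes "\<forall>m\<in>Poly_Mapping.keys h. tdeg m < K"
  shows "TT K (h * qq n) \<in> dideal_x2"
proof -
  have "TT K (h * qq n) = coeff (VPhi K h * Phi (qq n)) K + coeff (Phi h * VPhi K (qq n)) K"
    by (simp add: TT_def VPhi_mult)
  moreover have "coeff (VPhi K h * Phi (qq n)) K \<in> dideal_x2"
    unfolding coeff_mult by (intro dideal_sum dideal_mult_any coeff_Phi_qq_dideal) auto
  moreover have "coeff (Phi h * VPhi K (qq n)) K = 0"
    unfolding coeff_mult
  proof (rule sum.neutral, rule ballI)
    fix i assume i: "i \<in> {..K}"
    show "coeff (Phi h) i * coeff (VPhi K (qq n)) (K - i) = 0"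
    proof (cases "i = K")
      case True then show ?thesis using Phi_zero_high[OF assms] by simp
    next
      case False
      obtain s where s: "K - i = Suc s" using False i by (metis Suc_diff_1 atMost_iff le_neq_implies_less zero_less_diff)
      have "coeff (VPhi K (qq n :: 'a dpoly)) (Suc s) = (\<Sum>j\<le>Suc s. of_nat (fact j) * coeff (Phi (pd j (qq n :: 'a dpoly))) (Suc s - j))"
        by (rule coeff_VPhi) (use s in linarith)
      also have "\<dots> = 0" by (rule W_zero)
      finally show ?thesis unfolding s by simp
    qed
  qed
  ultimately show ?thesis by simp
qed

inductive_set igenD :: "nat \<Rightarrow> 'k::comm_ring_1 dpoly set" for D where
  igenD0: "0 \<in> igenD D"
| igenDS: "p \<in> igenD D \<Longrightarrow> \<forall>m\<in>Poly_Mapping.keys h. tdeg m + 2 \<le> D \<Longrightarrow> p + h * qq n \<in> igenD D"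

lemma TT_igenD: "p \<in> igenD D \<Longrightarrow> D \<le> K + 1 \<Longrightarrow> TT K p \<in> dideal_x2"
proof (induction rule: igenD.induct)
  case igenD0 then show ?case by (simp add: dideal_x2.zero)
next
  case (igenDS p h n)
  have "TT K (h * qq n) \<in> dideal_x2"
    using igenDS.hyps(2) igenDS.prems by (intro TT_gen) fastforce
  then show ?case using igenDS by (simp add: TT_add dideal_x2.add)
qed

definition trunc :: "nat \<Rightarrow> 'k::comm_ring_1 dpoly \<Rightarrow> 'k dpoly" where
  "trunc D p = (\<Sum>m\<in>{m\<in>Poly_Mapping.keys p. tdeg m \<le> D}. Poly_Mapping.single m (Poly_Mapping.lookup p m))"

lemma lookup_trunc: "Poly_Mapping.lookup (trunc D p) m = (if tdeg m \<le> D then Poly_Mapping.lookup p m else 0)"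
proof -
  have "Poly_Mapping.lookup (trunc D p) m = (\<Sum>m'\<in>{m\<in>Poly_Mapping.keys p. tdeg m \<le> D}. if m' = m then Poly_Mapping.lookup p m' else 0)"
    unfolding trunc_def lookup_sum by (rule sum.cong) (auto simp: lookup_single when_def)
  also have "\<dots> = (if tdeg m \<le> D then Poly_Mapping.lookup p m else 0)"
    by (auto simp: sum.delta in_keys_iff)
  finally show ?thesis .
qed

lemma trunc_add: "trunc D (p + q) = trunc D p + trunc D q"
  by (rule poly_mapping_eqI) (simp add: lookup_trunc lookup_add)

lemma trunc_0[simp]: "trunc D 0 = 0"
  by (simp add: trunc_def)

lemma trunc_id: "\<forall>m\<in>Poly_Mapping.keys p. tdeg m \<le> D \<Longrightarrow> trunc D p = p"
  by (rule poly_mapping_eqI) (auto simp: lookup_trunc in_keys_iff)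

lemma keys_trunc: "m \<in> Poly_Mapping.keys (trunc D p) \<Longrightarrow> tdeg m \<le> D \<and> m \<in> Poly_Mapping.keys p"
  by (auto simp: in_keys_iff lookup_trunc split: if_splits)

lemma trunc_sum: "finite S \<Longrightarrow> trunc D (sum f S) = (\<Sum>s\<in>S. trunc D (f s))"
  by (induction S rule: finite_induct) (simp_all add: trunc_add)

lemma trunc_single: "trunc D (Poly_Mapping.single m c) = (if tdeg m \<le> D then Poly_Mapping.single m c else 0)"
  by (rule poly_mapping_eqI) (auto simp: lookup_trunc lookup_single when_def)

lemma keys_qq: "m \<in> Poly_Mapping.keys (qq n :: 'k::comm_ring_1 dpoly) \<Longrightarrow> tdeg m = 2"
proof -
  assume m: "m \<in> Poly_Mapping.keys (qq n :: 'k dpoly)"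
  have "qq n = (\<Sum>i\<le>n. Poly_Mapping.single (Poly_Mapping.single i 1 + Poly_Mapping.single (n - i) 1) (of_nat (n choose i) :: 'k))"
    unfolding qq_def
  proof (rule sum.cong[OF refl])
    fix i
    show "(of_nat (n choose i) * (dvar i * dvar (n - i)) :: 'k dpoly) = Poly_Mapping.single (Poly_Mapping.single i 1 + Poly_Mapping.single (n - i) 1) (of_nat (n choose i))"
      by (simp add: dvar_def mult_single single_of_nat[symmetric] del: single_of_nat)
  qed
  then have "Poly_Mapping.keys (qq n :: 'k dpoly) \<subseteq> (\<Union>i\<le>n. Poly_Mapping.keys (Poly_Mapping.single (Poly_Mapping.single i 1 + Poly_Mapping.single (n - i) 1) (of_nat (n choose i) :: 'k)))"
    using keys_sum by metis
  with m obtain i where "m \<in> Poly_Mapping.keys (Poly_Mapping.single (Poly_Mapping.single i 1 + Poly_Mapping.single (n - i) 1) (of_nat (n choose i) :: 'k))"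
    by blast
  then have "m = Poly_Mapping.single i 1 + Poly_Mapping.single (n - i) 1"
    by (simp split: if_splits)
  then show ?thesis by (simp add: tdeg_add)
qed

lemma trunc_mult_qq: "trunc D (h * qq n) = (if 2 \<le> D then trunc (D - 2) h * qq n else 0)"
proof -
  let ?A = "Poly_Mapping.keys h" and ?B = "Poly_Mapping.keys (qq n :: 'a dpoly)"
  have lhs: "trunc D (h * qq n) = (\<Sum>a\<in>?A. \<Sum>b\<in>?B. if tdeg a + 2 \<le> D then Poly_Mapping.single (a + b) (Poly_Mapping.lookup h a * Poly_Mapping.lookup (qq n) b) else 0)"
  proof -
    have "trunc D (h * qq n) = trunc D (\<Sum>a\<in>?A. \<Sum>b\<in>?B. Poly_Mapping.single (a + b) (Poly_Mapping.lookup h a * Poly_Mapping.lookup (qq n) b))"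
      by (rule arg_cong[where f="trunc D", OF mult_expand]) auto
    also have "\<dots> = (\<Sum>a\<in>?A. \<Sum>b\<in>?B. if tdeg a + 2 \<le> D then Poly_Mapping.single (a + b) (Poly_Mapping.lookup h a * Poly_Mapping.lookup (qq n) b) else 0)"
      by (simp add: trunc_sum trunc_single tdeg_add keys_qq cong: sum.cong)
    finally show ?thesis .
  qed
  show ?thesis
  proof (cases "2 \<le> D")
    case True
    have "trunc (D - 2) h * qq n = (\<Sum>a\<in>?A. \<Sum>b\<in>?B. Poly_Mapping.single (a + b) (Poly_Mapping.lookup (trunc (D - 2) h) a * Poly_Mapping.lookup (qq n) b))"
      by (rule mult_expand) (auto dest: keys_trunc)
    also have "\<dots> = (\<Sum>a\<in>?A. \<Sum>b\<in>?B. if tdeg a + 2 \<le> D then Poly_Mapping.single (a + b) (Poly_Mapping.lookup h a * Poly_Mapping.lookup (qq n) b) else 0)"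
      using True by (intro sum.cong refl) (auto simp: lookup_trunc)
    finally show ?thesis using lhs True by simp
  next
    case False
    then show ?thesis using lhs by simp
  qed
qed

lemma igen_trunc: "p \<in> igen \<Longrightarrow> trunc D p \<in> igenD D"
proof (induction rule: igen.induct)
  case igen0 then show ?case by (simp add: igenD.igenD0)
next
  case (igenS p h n)
  show ?case
  proof (cases "2 \<le> D")
    case True
    have "trunc D p + trunc (D - 2) h * qq n \<in> igenD D"
      using igenS.IH True by (intro igenD.igenDS) (auto dest: keys_trunc)
    then show ?thesis using True by (simp add: trunc_add trunc_mult_qq)
  next
    case False
    then show ?thesis using igenS.IH by (simp add: trunc_add trunc_mult_qq)
  qed
qed

lemma TT_dideal:
  assumes "p \<in> dideal_x2" "\<forall>m\<in>Poly_Mapping.keys p. tdeg m \<le> D" "D \<le> K + 1"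
  shows "TT K p \<in> dideal_x2"
proof -
  have "trunc D p \<in> igenD D" using assms(1) by (intro igen_trunc dideal_sub_igen)
  then have "p \<in> igenD D" using trunc_id[OF assms(2)] by simp
  then show ?thesis using assms(3) by (rule TT_igenD)
qed

lemma TT_exact:
  assumes deg: "\<forall>m\<in>Poly_Mapping.keys p. tdeg m \<le> D"
    and win: "\<forall>m\<in>Poly_Mapping.keys p. \<forall>i\<in>Poly_Mapping.keys m. i < K \<longrightarrow> i + D \<le> K"
  shows "TT K p = of_nat (fact K) * pd K p"
proof -
  have z: "coeff (Phi (pd j p)) (K - j) = 0" if j: "j < K" for j
  proof (cases "pd j p = 0")
    case True then show ?thesis by simp
  next
    case False
    then obtain m' where "m' \<in> Poly_Mapping.keys (pd j p)"
      by (metis all_not_in_conv keys_eq_empty)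
    from keys_pd[OF this] obtain m where m: "m \<in> Poly_Mapping.keys p" "j \<in> Poly_Mapping.keys m" by blast
    then have jD: "j + D \<le> K" using win j by blast
    have D1: "D \<ge> 1" using tdeg_sub_single(2)[OF m(2)] deg m(1) by fastforce
    have "\<forall>m''\<in>Poly_Mapping.keys (pd j p). tdeg m'' \<le> D - 1"
    proof
      fix m'' assume "m'' \<in> Poly_Mapping.keys (pd j p)"
      from keys_pd[OF this] obtain m0 where "m0 \<in> Poly_Mapping.keys p" "j \<in> Poly_Mapping.keys m0" "m'' = m0 - Poly_Mapping.single j 1"
        by blast
      then show "tdeg m'' \<le> D - 1" using tdeg_sub_single(1) deg by fastforce
    qed
    then have "degree (Phi (pd j p)) \<le> D - 1" by (rule degree_Phi)
    then show ?thesis using jD D1 by (intro coeff_eq_0) linarith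
  qed
  have split: "{..K} = insert K {..<K}" by auto
  have "TT K p = (\<Sum>j\<le>K. of_nat (fact j) * coeff (Phi (pd j p)) (K - j))"
    unfolding TT_def by (rule coeff_VPhi) simp
  also have "\<dots> = of_nat (fact K) * coeff (Phi (pd K p)) 0 + (\<Sum>j<K. of_nat (fact j) * coeff (Phi (pd j p)) (K - j))"
    unfolding split by (simp add: sum.insert)
  also have "(\<Sum>j<K. of_nat (fact j) * coeff (Phi (pd j p)) (K - j)) = 0"
    using z by simp
  finally show ?thesis by (simp add: Phi_coeff0)
qed

lemma keys_dconst_mult: "Poly_Mapping.keys (dconst a * c :: 'k::comm_ring_1 dpoly) \<subseteq> Poly_Mapping.keys c"
proof
  fix m assume "m \<in> Poly_Mapping.keys (dconst a * c)"
  then obtain x y where "m = x + y" "x \<in> Poly_Mapping.keys (dconst a :: 'k dpoly)" "y \<in> Poly_Mapping.keys c"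
    using keys_mult[of "dconst a" c] by blast
  then show "m \<in> Poly_Mapping.keys c" by (auto simp: dconst_def split: if_splits)
qed

lemma keys_mult_XX: "Poly_Mapping.keys (c * XX h :: 'k::comm_ring_1 dpoly) \<subseteq> (\<lambda>m. m + h) ` Poly_Mapping.keys c"
proof
  fix M assume "M \<in> Poly_Mapping.keys (c * XX h)"
  then obtain x y where "M = x + y" "x \<in> Poly_Mapping.keys c" "y \<in> Poly_Mapping.keys (XX h :: 'k dpoly)"
    using keys_mult[of c "XX h"] by blast
  then show "M \<in> (\<lambda>m. m + h) ` Poly_Mapping.keys c" by auto
qed

lemma dideal_dconst_cancel:
  fixes c :: "'k::field dpoly"
  assumes "a \<noteq> 0" "dconst a * c \<in> dideal_x2"
  shows "c \<in> dideal_x2"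
proof -
  have "dconst (inverse a) * (dconst a * c) \<in> dideal_x2" using assms(2) by (rule dideal_x2.smult)
  also have "dconst (inverse a) * (dconst a * c) = c"
    using assms(1) by (simp add: mult.assoc[symmetric] dconst_mult[symmetric])
  finally show ?thesis .
qed

lemma extract_main:
  fixes S :: "'s set" and c :: "'s \<Rightarrow> 'k::field_char_0 dpoly" and H :: "'s \<Rightarrow> (nat \<Rightarrow>\<^sub>0 nat)"
  assumes "finite S" "S \<noteq> {}" "inj_on H S"
    and "\<forall>s\<in>S. c s \<notin> dideal_x2"
    and "\<forall>s\<in>S. \<forall>m\<in>Poly_Mapping.keys (c s). \<forall>i\<in>Poly_Mapping.keys m. i < L"
    and "\<forall>s\<in>S. \<forall>i\<in>Poly_Mapping.keys (H s). B \<le> i"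
    and "\<forall>s\<in>S. \<forall>m\<in>Poly_Mapping.keys (c s). tdeg m + tdeg (H s) \<le> D"
    and LDB: "L + D \<le> B"
  shows "(\<Sum>s\<in>S. c s * XX (H s)) \<notin> dideal_x2"
  using assms(1-7)
proof (induction "\<Sum>s\<in>S. tdeg (H s)" arbitrary: S c H rule: less_induct)
  case less
  note fin = less.prems(1) and ne = less.prems(2) and inj = less.prems(3) and notin = less.prems(4)
    and low = less.prems(5) and high = less.prems(6) and degs = less.prems(7)
  show ?case
  proof (cases "\<forall>s\<in>S. H s = 0")
    case True
    obtain s0 where s0: "s0 \<in> S" using ne by blast
    have "S = {s0}"
    proof
      show "S \<subseteq> {s0}"
      proof
        fix x assume x: "x \<in> S"
        have "H x = H s0" using True x s0 by simp
        then have "x = s0" by (rule inj_onD[OF inj _ x s0])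
        then show "x \<in> {s0}" by simp
      qed
    qed (use s0 in auto)
    then show ?thesis using notin True by simp
  next
    case False
    let ?U = "\<Union>s\<in>S. Poly_Mapping.keys (H s)"
    have Ufin: "finite ?U" using fin by simp
    have Une: "?U \<noteq> {}" using False by auto
    define K where "K = Min ?U"
    have KU: "K \<in> ?U" unfolding K_def using Ufin Une by (rule Min_in)
    have Kmin: "\<And>s i. s \<in> S \<Longrightarrow> i \<in> Poly_Mapping.keys (H s) \<Longrightarrow> K \<le> i"
      unfolding K_def using Ufin by (auto intro: Min_le)
    have BK: "B \<le> K" using KU high by auto
    define p where "p = (\<Sum>s\<in>S. c s * XX (H s))"
    have keysp: "\<forall>M\<in>Poly_Mapping.keys p. \<exists>s\<in>S. \<exists>m\<in>Poly_Mapping.keys (c s). M = m + H s"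
    proof
      fix M assume "M \<in> Poly_Mapping.keys p"
      moreover have "Poly_Mapping.keys p \<subseteq> (\<Union>s\<in>S. Poly_Mapping.keys (c s * XX (H s)))"
        unfolding p_def by (rule keys_sum)
      ultimately obtain s where s: "s \<in> S" "M \<in> Poly_Mapping.keys (c s * XX (H s))"
        by blast
      then show "\<exists>s\<in>S. \<exists>m\<in>Poly_Mapping.keys (c s). M = m + H s" using keys_mult_XX by blast
    qed
    have degp: "\<forall>M\<in>Poly_Mapping.keys p. tdeg M \<le> D"
      using keysp degs by (fastforce simp: tdeg_add)
    have winp: "\<forall>M\<in>Poly_Mapping.keys p. \<forall>i\<in>Poly_Mapping.keys M. i < K \<longrightarrow> i + D \<le> K"
    proof (intro ballI impI)
      fix M i assume M: "M \<in> Poly_Mapping.keys p" and i: "i \<in> Poly_Mapping.keys M" and iK: "i < K"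
      from keysp M obtain s m where sm: "s \<in> S" "m \<in> Poly_Mapping.keys (c s)" "M = m + H s" by blast
      then have "i \<in> Poly_Mapping.keys m \<or> i \<in> Poly_Mapping.keys (H s)" using i by (simp add: keys_add_nat)
      then show "i + D \<le> K"
      proof
        assume "i \<in> Poly_Mapping.keys m" then have "i < L" using low sm by blast
        then show ?thesis using LDB BK by linarith
      next
        assume "i \<in> Poly_Mapping.keys (H s)" then have "K \<le> i" using Kmin sm by blast
        then show ?thesis using iK by linarith
      qed
    qed
    define S' where "S' = {s\<in>S. K \<in> Poly_Mapping.keys (H s)}"
    define c' where "c' s = dconst (of_nat (fact K * Poly_Mapping.lookup (H s) K)) * c s" for s
    define H' where "H' s = H s - Poly_Mapping.single K 1" for s
    have S'S: "S' \<subseteq> S" by (auto simp: S'_def)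
    have pdc: "pd K (c s) = 0" if "s \<in> S" for s
    proof (rule pd_zero_if_absent, intro ballI notI)
      fix m assume "m \<in> Poly_Mapping.keys (c s)" "K \<in> Poly_Mapping.keys m"
      then have "K < L" using low that by blast
      then show False using LDB BK by linarith
    qed
    have "of_nat (fact K) * pd K p = (\<Sum>s\<in>S. of_nat (fact K) * (c s * (dconst (of_nat (Poly_Mapping.lookup (H s) K)) * XX (H s - Poly_Mapping.single K 1))))"
      unfolding p_def pd_sum[OF fin] sum_distrib_left
    proof (rule sum.cong[OF refl])
      fix s assume s: "s \<in> S"
      show "of_nat (fact K) * pd K (c s * XX (H s)) = of_nat (fact K) * (c s * (dconst (of_nat (Poly_Mapping.lookup (H s) K)) * XX (H s - Poly_Mapping.single K 1)))"
        by (simp only: pd_mult pdc[OF s] pd_single mult_zero_left add_0 mult_1_left)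
    qed
    also have "\<dots> = (\<Sum>s\<in>S'. of_nat (fact K) * (c s * (dconst (of_nat (Poly_Mapping.lookup (H s) K)) * XX (H s - Poly_Mapping.single K 1))))"
      using fin by (intro sum.mono_neutral_right) (auto simp: S'_def in_keys_iff)
    also have "\<dots> = (\<Sum>s\<in>S'. c' s * XX (H' s))"
      by (rule sum.cong[OF refl]) (simp add: c'_def H'_def of_nat_dconst dconst_mult algebra_simps)
    finally have eq: "of_nat (fact K) * pd K p = (\<Sum>s\<in>S'. c' s * XX (H' s))" .
    have IH: "(\<Sum>s\<in>S'. c' s * XX (H' s)) \<notin> dideal_x2"
    proof (rule less.hyps)
      show "finite S'" using fin S'S by (rule finite_subset[rotated])
      show "S' \<noteq> {}" using KU by (auto simp: S'_def)
      show "inj_on H' S'"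
      proof (rule inj_onI)
        fix s t assume "s \<in> S'" "t \<in> S'" "H' s = H' t"
        then have "H' s + Poly_Mapping.single K 1 = H' t + Poly_Mapping.single K 1" by simp
        moreover have "H' s + Poly_Mapping.single K 1 = H s" using \<open>s \<in> S'\<close> unfolding H'_def S'_def
          by (intro sub_single_readd) simp
        moreover have "H' t + Poly_Mapping.single K 1 = H t" using \<open>t \<in> S'\<close> unfolding H'_def S'_def
          by (intro sub_single_readd) simp
        ultimately have "H s = H t" by simp
        then show "s = t" using inj \<open>s \<in> S'\<close> \<open>t \<in> S'\<close> S'S by (auto dest: inj_onD)
      qed
      show "\<forall>s\<in>S'. c' s \<notin> dideal_x2"
      proof
        fix s assume s: "s \<in> S'"
        then have "Poly_Mapping.lookup (H s) K \<noteq> 0" by (auto simp: S'_def in_keys_iff)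
        then have nz: "(of_nat (fact K * Poly_Mapping.lookup (H s) K) :: 'k) \<noteq> 0" by simp
        show "c' s \<notin> dideal_x2"
          using dideal_dconst_cancel[OF nz] notin s S'S unfolding c'_def by blast
      qed
      show "\<forall>s\<in>S'. \<forall>m\<in>Poly_Mapping.keys (c' s). \<forall>i\<in>Poly_Mapping.keys m. i < L"
        using low S'S keys_dconst_mult unfolding c'_def by blast
      show "\<forall>s\<in>S'. \<forall>i\<in>Poly_Mapping.keys (H' s). B \<le> i"
      proof (intro ballI)
        fix s i assume "s \<in> S'" "i \<in> Poly_Mapping.keys (H' s)"
        then have "i \<in> Poly_Mapping.keys (H s)" by (auto simp: H'_def in_keys_iff lookup_minus)
        then show "B \<le> i" using high \<open>s \<in> S'\<close> S'S by blast
      qed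
      have tH': "tdeg (H' s) = tdeg (H s) - 1" "tdeg (H s) \<ge> 1" if "s \<in> S'" for s
        using that tdeg_sub_single[of K "H s"] by (auto simp: S'_def H'_def)
      show "\<forall>s\<in>S'. \<forall>m\<in>Poly_Mapping.keys (c' s). tdeg m + tdeg (H' s) \<le> D"
      proof (intro ballI)
        fix s m assume "s \<in> S'" "m \<in> Poly_Mapping.keys (c' s)"
        then have "m \<in> Poly_Mapping.keys (c s)" using keys_dconst_mult unfolding c'_def by blast
        then have "tdeg m + tdeg (H s) \<le> D" using degs \<open>s \<in> S'\<close> S'S by blast
        then show "tdeg m + tdeg (H' s) \<le> D" using tH'[OF \<open>s \<in> S'\<close>] by linarith
      qed
      have "(\<Sum>s\<in>S'. tdeg (H' s)) < (\<Sum>s\<in>S'. tdeg (H s))"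
      proof (rule sum_strict_mono)
        show "finite S'" using fin S'S by (rule finite_subset[rotated])
        show "S' \<noteq> {}" using KU by (auto simp: S'_def)
        fix s assume "s \<in> S'" then show "tdeg (H' s) < tdeg (H s)" using tH' by fastforce
      qed
      also have "\<dots> \<le> (\<Sum>s\<in>S. tdeg (H s))" using fin S'S by (intro sum_mono2) auto
      finally show "(\<Sum>s\<in>S'. tdeg (H' s)) < (\<Sum>s\<in>S. tdeg (H s))" .
    qed
    show ?thesis
    proof
      assume "(\<Sum>s\<in>S. c s * XX (H s)) \<in> dideal_x2"
      then have "p \<in> dideal_x2" by (simp add: p_def)
      then have "TT K p \<in> dideal_x2" using degp LDB BK by (intro TT_dideal[of p D K]) auto
      then have "of_nat (fact K) * pd K p \<in> dideal_x2" using TT_exact[OF degp winp] by simp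
      then show False using IH eq by simp
    qed
  qed
qed

definition Hm :: "nat \<Rightarrow> ((nat \<times> nat) \<Rightarrow>\<^sub>0 nat) \<Rightarrow> (nat \<Rightarrow>\<^sub>0 nat)" where
  "Hm N m = (\<Sum>v\<in>Poly_Mapping.keys m. Poly_Mapping.single (N * fst v + snd v) (Poly_Mapping.lookup m v))"

lemma deval_dvar:
  "deval f (\<lambda>i. dvar (N * i)) = (\<Sum>m\<in>Poly_Mapping.keys f. Poly_Mapping.lookup f m * XX (Hm N m))"
  unfolding deval_def
proof (rule sum.cong[OF refl])
  fix m
  have "(\<Prod>v\<in>Poly_Mapping.keys m. ((dderiv ^^ snd v) (dvar (N * fst v)) :: 'a dpoly) ^ Poly_Mapping.lookup m v)
      = (\<Prod>v\<in>Poly_Mapping.keys m. XX (Poly_Mapping.single (N * fst v + snd v) (Poly_Mapping.lookup m v)))"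
    by (rule prod.cong[OF refl]) (simp only: dderiv_iter_dvar dvar_power)
  also have "\<dots> = XX (Hm N m)"
    unfolding Hm_def by (rule prod_single_one) simp
  finally show "Poly_Mapping.lookup f m * (\<Prod>v\<in>Poly_Mapping.keys m. ((dderiv ^^ snd v) (dvar (N * fst v)) :: 'a dpoly) ^ Poly_Mapping.lookup m v)
      = Poly_Mapping.lookup f m * XX (Hm N m)" by simp
qed

lemma idx_inj:
  assumes "b < N" "d < N" "N * a + b = N * c + (d::nat)"
  shows "a = c \<and> b = d"
proof -
  have N0: "0 < N" using assms(1) by simp
  have e1: "(N * a + b) div N = a" using assms(1) N0 by simp
  have e2: "(N * c + d) div N = c" using assms(2) N0 by simp
  have e3: "(N * a + b) mod N = b" using assms(1) by simp
  have e4: "(N * c + d) mod N = d" using assms(2) by simp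
  have "a = c" using e1 e2 assms(3) by simp
  moreover have "b = d" using e3 e4 assms(3) by simp
  ultimately show ?thesis by simp
qed

lemma lookup_Hm:
  assumes "\<forall>w\<in>Poly_Mapping.keys m. snd w < N" "snd v < N"
  shows "Poly_Mapping.lookup (Hm N m) (N * fst v + snd v) = Poly_Mapping.lookup m v"
proof -
  have "Poly_Mapping.lookup (Hm N m) (N * fst v + snd v)
      = (\<Sum>w\<in>Poly_Mapping.keys m. if w = v then Poly_Mapping.lookup m w else 0)"
    unfolding Hm_def lookup_sum
  proof (rule sum.cong[OF refl])
    fix w assume w: "w \<in> Poly_Mapping.keys m"
    have "N * fst w + snd w = N * fst v + snd v \<longleftrightarrow> w = v"
      using idx_inj[of "snd w" N "snd v" "fst w" "fst v"] assms w by (cases w, cases v) auto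
    then show "Poly_Mapping.lookup (Poly_Mapping.single (N * fst w + snd w) (Poly_Mapping.lookup m w)) (N * fst v + snd v)
        = (if w = v then Poly_Mapping.lookup m w else 0)"
      by (simp add: lookup_single when_def)
  qed
  also have "\<dots> = Poly_Mapping.lookup m v"
    by (simp add: sum.delta' in_keys_iff)
  finally show ?thesis .
qed

lemma keys_Hm: "i \<in> Poly_Mapping.keys (Hm N m) \<Longrightarrow> \<exists>v\<in>Poly_Mapping.keys m. i = N * fst v + snd v"
proof -
  assume i: "i \<in> Poly_Mapping.keys (Hm N m)"
  have "Poly_Mapping.keys (Hm N m) \<subseteq> (\<Union>v\<in>Poly_Mapping.keys m. Poly_Mapping.keys (Poly_Mapping.single (N * fst v + snd v) (Poly_Mapping.lookup m v)))"
    unfolding Hm_def by (rule keys_sum)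
  with i obtain v where "v \<in> Poly_Mapping.keys m" "i \<in> Poly_Mapping.keys (Poly_Mapping.single (N * fst v + snd v) (Poly_Mapping.lookup m v))"
    by blast
  then show ?thesis by (auto split: if_splits)
qed

lemma tdeg_sum: "finite S \<Longrightarrow> tdeg (sum f S) = (\<Sum>s\<in>S. tdeg (f s))"
  by (induction S rule: finite_induct) (simp_all add: tdeg_add)

lemma tdeg_Hm: "tdeg (Hm N m) = (\<Sum>v\<in>Poly_Mapping.keys m. Poly_Mapping.lookup m v)"
  unfolding Hm_def by (simp add: tdeg_sum)

lemma single_one_nz: "Poly_Mapping.single j (1::nat) \<noteq> 0"
proof
  assume "Poly_Mapping.single j (1::nat) = 0"
  then have "Poly_Mapping.lookup (Poly_Mapping.single j (1::nat)) j = Poly_Mapping.lookup 0 j" by simp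
  then show False by simp
qed

lemma dvar_kplus: "dvar j \<in> kplus"
  using single_one_nz[of j] by (simp add: kplus_def dvar_def lookup_single when_def)

theorem lemma3:
  fixes f :: "'k::field_char_0 dpoly_over" and n :: nat
  assumes vars: "\<forall>m\<in>Poly_Mapping.keys f. \<forall>v\<in>Poly_Mapping.keys m. 1 \<le> fst v \<and> fst v \<le> n"
    and nonzero: "\<exists>m. \<not> D2_zero (Poly_Mapping.lookup f m)"
  shows "\<exists>a. (\<forall>i\<in>{1..n}. a i \<in> kplus) \<and> \<not> D2_zero (deval f a)"
proof -
  define G where "G = {m \<in> Poly_Mapping.keys f. Poly_Mapping.lookup f m \<notin> dideal_x2}"
  from nonzero obtain m0 where m0: "Poly_Mapping.lookup f m0 \<notin> dideal_x2" by (auto simp: D2_zero_def)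
  then have "Poly_Mapping.lookup f m0 \<noteq> 0" using dideal_x2.zero by auto
  then have m0G: "m0 \<in> G" using m0 by (simp add: G_def in_keys_iff)
  have Gsub: "G \<subseteq> Poly_Mapping.keys f" by (auto simp: G_def)
  have Gfin: "finite G" by (rule finite_subset[OF Gsub]) simp
  define C where "C = (\<Union>m\<in>Poly_Mapping.keys f. Poly_Mapping.keys (Poly_Mapping.lookup f m))"
  have Cfin: "finite C" by (simp add: C_def)
  define L where "L = Suc (Max (insert 0 (\<Union>M\<in>C. Poly_Mapping.keys M)))"
  define Dc where "Dc = Max (insert 0 (tdeg ` C))"
  define Dh where "Dh = Max (insert 0 ((\<lambda>m. sum (Poly_Mapping.lookup m) (Poly_Mapping.keys m)) ` Poly_Mapping.keys f))"
  define J where "J = Max (insert 0 (snd ` (\<Union>m\<in>Poly_Mapping.keys f. Poly_Mapping.keys m)))"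
  define N where "N = L + (Dc + Dh) + J + 1"
  define a where "a i = (dvar (N * i) :: 'k dpoly)" for i
  have akp: "\<forall>i\<in>{1..n}. a i \<in> kplus" by (simp add: a_def dvar_kplus)
  have Jb: "snd v < N" if "m \<in> Poly_Mapping.keys f" "v \<in> Poly_Mapping.keys m" for m v
  proof -
    have "snd v \<le> J" unfolding J_def using that by (intro Max_ge) auto
    then show ?thesis by (simp add: N_def)
  qed
  have dev: "deval f a = (\<Sum>m\<in>Poly_Mapping.keys f. Poly_Mapping.lookup f m * XX (Hm N m))"
    unfolding a_def by (rule deval_dvar)
  let ?P = "\<Sum>m\<in>G. Poly_Mapping.lookup f m * XX (Hm N m)"
  let ?Q = "\<Sum>m\<in>Poly_Mapping.keys f - G. Poly_Mapping.lookup f m * XX (Hm N m)"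
  have split: "deval f a = ?Q + ?P"
    unfolding dev using Gsub by (simp add: sum.subset_diff[of G "Poly_Mapping.keys f"])
  have Qin: "?Q \<in> dideal_x2"
  proof (rule dideal_sum)
    fix m assume "m \<in> Poly_Mapping.keys f - G"
    then have "Poly_Mapping.lookup f m \<in> dideal_x2" by (auto simp: G_def)
    then have "XX (Hm N m) * Poly_Mapping.lookup f m \<in> dideal_x2" by (rule dideal_mult_any)
    then show "Poly_Mapping.lookup f m * XX (Hm N m) \<in> dideal_x2" by (simp add: mult.commute)
  qed simp
  have Pnot: "?P \<notin> dideal_x2"
  proof (rule extract_main[where L=L and B=N and D="Dc + Dh"])
    show "finite G" by (rule Gfin)
    show "G \<noteq> {}" using m0G by blast
    show "inj_on (Hm N) G"
    proof (rule inj_onI)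
      fix m1 m2 assume m1: "m1 \<in> G" and m2: "m2 \<in> G" and eq: "Hm N m1 = Hm N m2"
      have k1: "m1 \<in> Poly_Mapping.keys f" and k2: "m2 \<in> Poly_Mapping.keys f" using m1 m2 Gsub by auto
      show "m1 = m2"
      proof (rule poly_mapping_eqI)
        fix v
        show "Poly_Mapping.lookup m1 v = Poly_Mapping.lookup m2 v"
        proof (cases "snd v < N")
          case True
          have "Poly_Mapping.lookup m1 v = Poly_Mapping.lookup (Hm N m1) (N * fst v + snd v)"
            using Jb[OF k1] True by (intro lookup_Hm[symmetric]) auto
          also have "\<dots> = Poly_Mapping.lookup (Hm N m2) (N * fst v + snd v)" by (simp add: eq)
          also have "\<dots> = Poly_Mapping.lookup m2 v"
            using Jb[OF k2] True by (intro lookup_Hm) auto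
          finally show ?thesis .
        next
          case False
          have "v \<notin> Poly_Mapping.keys m1" using Jb[OF k1, of v] False by blast
          moreover have "v \<notin> Poly_Mapping.keys m2" using Jb[OF k2, of v] False by blast
          ultimately show ?thesis by (simp add: in_keys_iff)
        qed
      qed
    qed
    show "\<forall>s\<in>G. Poly_Mapping.lookup f s \<notin> dideal_x2" by (auto simp: G_def)
    show "\<forall>s\<in>G. \<forall>m\<in>Poly_Mapping.keys (Poly_Mapping.lookup f s). \<forall>i\<in>Poly_Mapping.keys m. i < L"
    proof (intro ballI)
      fix s m i assume s: "s \<in> G" and m: "m \<in> Poly_Mapping.keys (Poly_Mapping.lookup f s)" and i: "i \<in> Poly_Mapping.keys m"
      have "m \<in> C" using s m Gsub by (auto simp: C_def)
      then have "i \<le> Max (insert 0 (\<Union>M\<in>C. Poly_Mapping.keys M))" using i Cfin by (intro Max_ge) auto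
      then show "i < L" by (simp add: L_def)
    qed
    show "\<forall>s\<in>G. \<forall>i\<in>Poly_Mapping.keys (Hm N s). N \<le> i"
    proof (intro ballI)
      fix s i assume s: "s \<in> G" and i: "i \<in> Poly_Mapping.keys (Hm N s)"
      from keys_Hm[OF i] obtain v where v: "v \<in> Poly_Mapping.keys s" "i = N * fst v + snd v" by blast
      have "1 \<le> fst v" using vars s Gsub v(1) by blast
      then have "N \<le> N * fst v" by simp
      then show "N \<le> i" using v(2) by linarith
    qed
    show "\<forall>s\<in>G. \<forall>m\<in>Poly_Mapping.keys (Poly_Mapping.lookup f s). tdeg m + tdeg (Hm N s) \<le> Dc + Dh"
    proof (intro ballI)
      fix s m assume s: "s \<in> G" and m: "m \<in> Poly_Mapping.keys (Poly_Mapping.lookup f s)"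
      have "m \<in> C" using s m Gsub by (auto simp: C_def)
      then have "tdeg m \<le> Dc" unfolding Dc_def using Cfin by (intro Max_ge) auto
      moreover have "tdeg (Hm N s) \<le> Dh"
        unfolding tdeg_Hm Dh_def using s Gsub by (intro Max_ge) auto
      ultimately show "tdeg m + tdeg (Hm N s) \<le> Dc + Dh" by linarith
    qed
    show "L + (Dc + Dh) \<le> N" by (simp add: N_def)
  qed
  have "\<not> D2_zero (deval f a)"
  proof
    assume "D2_zero (deval f a)"
    then have "?Q + ?P \<in> dideal_x2" by (simp add: D2_zero_def split)
    then have "(?Q + ?P) - ?Q \<in> dideal_x2" using Qin by (rule dideal_diff)
    then show False using Pnot by simp
  qed
  then show ?thesis using akp by blast
qed

end
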